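(* Let $\mathcal L$ be the Heisenberg–Virasoro algebra with basis $\{L_n,I_n,z_1,z_2,z_3: n\in\mathbb Z\}$ and brackets $[L_m,L_n]=(n-m)L_{m+n}+\frac{m^3-m}{12}\delta_{m+n,0}z_1$, $[I_m,I_n]=m\delta_{m+n,0}z_3$, $[L_m,I_n]=nI_{m+n}+\delta_{m+n,0}(m^2+m)z_2$, $[I_0,\mathcal L]=[z_1,\mathcal L]=[z_2,\mathcal L]=[z_3,\mathcal L]=0$. Let $\mathcal H=\mathrm{Span}\{I_r,z_3: r\in\mathbb Z\}$ and $\mathfrak p=\mathrm{Span}\{I_n,z_1,z_2,z_3: n\in\mathbb Z\}$. Let $\phi:\mathfrak p\to\mathbb C$ be a finite Lie algebra homomorphism with $\phi(\mathcal H)\neq 0$, and $S^\phi=\{n\in\mathbb Z:\phi(I_n)\neq 0\}$. Then $W(\phi)$ is irreducible if and only if $|S^\phi|\ge 2$.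
   Context: A Lie algebra homomorphism $\phi:\mathfrak p\to\mathbb C$ is a linear map vanishing on $[\mathfrak p,\mathfrak p]=\mathbb C z_3$. $\phi$ is called finite if $S^\phi$ is finite and $\phi(z_2)=0$. $W(\phi)=\mathcal U(\mathcal L)\otimes_{\mathcal U(\mathfrak p)}\mathbb C w_\phi$, where $\mathbb C w_\phi$ is the one-dimensional $\mathfrak p$-module with $pw_\phi=\phi(p)w_\phi$. *)

theory Defs
  imports Complex_Main
begin

datatype hv = L int | I int | Z1 | Z2 | Z3

text \<open>Structure constants: hv_br x y z is the coefficient of basis element z in [x,y].\<close>
fun hv_br :: "hv \<Rightarrow> hv \<Rightarrow> hv \<Rightarrow> complex" where
  "hv_br (L m) (L n) = (\<lambda>z. (if z = L (m + n) then of_int (n - m) else 0)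
       + (if z = Z1 \<and> m + n = 0 then of_int (m ^ 3 - m) / 12 else 0))"
| "hv_br (I m) (I n) = (\<lambda>z. if z = Z3 \<and> m + n = 0 then of_int m else 0)"
| "hv_br (L m) (I n) = (\<lambda>z. (if z = I (m + n) then of_int n else 0)
       + (if z = Z2 \<and> m + n = 0 then of_int (m ^ 2 + m) else 0))"
| "hv_br (I n) (L m) = (\<lambda>z. - ((if z = I (m + n) then of_int n else 0)
       + (if z = Z2 \<and> m + n = 0 then of_int (m ^ 2 + m) else 0)))"
| "hv_br _ _ = (\<lambda>z. 0)"

definition p_basis :: "hv set" where
  "p_basis = range I \<union> {Z1, Z2, Z3}"

definition H_basis :: "hv set" where
  "H_basis = range I \<union> {Z3}"

text \<open>Tensor algebra T(L): finitely supported functions on words in the basis.\<close>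
definition Tfin :: "(hv list \<Rightarrow> complex) set" where
  "Tfin = {f. finite {w. f w \<noteq> 0}}"

definition mono :: "hv list \<Rightarrow> hv list \<Rightarrow> complex" where
  "mono w = (\<lambda>v. if v = w then 1 else 0)"

definition lmul :: "hv \<Rightarrow> (hv list \<Rightarrow> complex) \<Rightarrow> (hv list \<Rightarrow> complex)" where
  "lmul x f = (\<lambda>v. case v of [] \<Rightarrow> 0 | y # w \<Rightarrow> if y = x then f w else 0)"

text \<open>The element a (x y - y x - [x,y]) b of T(L), for words a, b.\<close>
definition relv :: "hv list \<Rightarrow> hv \<Rightarrow> hv \<Rightarrow> hv list \<Rightarrow> (hv list \<Rightarrow> complex)" where
  "relv a x y b = (\<lambda>v. mono (a @ [x, y] @ b) v - mono (a @ [y, x] @ b) v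
     - (if length v = length a + 1 + length b \<and> take (length a) v = a
           \<and> drop (length a + 1) v = b then hv_br x y (v ! length a) else 0))"

text \<open>Kernel of T(L) -> W(phi) = U(L) \<otimes>_{U(p)} C w_phi, i.e. the subspace spanned by the
  two-sided ideal of the commutator relations and the left ideal generated by p - phi(p).\<close>
inductive_set Wker :: "(hv \<Rightarrow> complex) \<Rightarrow> (hv list \<Rightarrow> complex) set" for \<phi> where
  rel: "relv a x y b \<in> Wker \<phi>"
| ind: "p \<in> p_basis \<Longrightarrow> (\<lambda>v. mono (a @ [p]) v - \<phi> p * mono a v) \<in> Wker \<phi>"
| zero: "(\<lambda>v. 0) \<in> Wker \<phi>"
| add: "f \<in> Wker \<phi> \<Longrightarrow> g \<in> Wker \<phi> \<Longrightarrow> (\<lambda>v. f v + g v) \<in> Wker \<phi>"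
| smult: "f \<in> Wker \<phi> \<Longrightarrow> (\<lambda>v. c * f v) \<in> Wker \<phi>"

text \<open>Submodules of W(phi) correspond to L-stable subspaces M of T(L) with Wker \<subseteq> M.
  W(phi) is irreducible iff it is nonzero and has no submodules besides 0 and itself.\<close>
definition W_irreducible :: "(hv \<Rightarrow> complex) \<Rightarrow> bool" where
  "W_irreducible \<phi> \<longleftrightarrow>
     Wker \<phi> \<noteq> Tfin \<and>
     (\<forall>M. Wker \<phi> \<subseteq> M \<and> M \<subseteq> Tfin
          \<and> (\<forall>f\<in>M. \<forall>g\<in>M. (\<lambda>v. f v + g v) \<in> M)
          \<and> (\<forall>f\<in>M. \<forall>c. (\<lambda>v. c * f v) \<in> M)
          \<and> (\<forall>f\<in>M. \<forall>x. lmul x f \<in> M)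
        \<longrightarrow> M = Wker \<phi> \<or> M = Tfin)"

text \<open>phi (given by its values on p_basis) is a Lie algebra homomorphism p -> C,
  i.e. vanishes on [p,p] = C z_3.\<close>
definition p_hom :: "(hv \<Rightarrow> complex) \<Rightarrow> bool" where
  "p_hom \<phi> \<longleftrightarrow> \<phi> Z3 = 0"

definition S_phi :: "(hv \<Rightarrow> complex) \<Rightarrow> int set" where
  "S_phi \<phi> = {n. \<phi> (I n) \<noteq> 0}"

definition finite_hom :: "(hv \<Rightarrow> complex) \<Rightarrow> bool" where
  "finite_hom \<phi> \<longleftrightarrow> p_hom \<phi> \<and> finite (S_phi \<phi>) \<and> \<phi> Z2 = 0"

end

theory Submission
  imports Defs "HOL-Library.Multiset"
begin

type_synonym 'k tm = "(complex \<times> 'k) list"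

definition val :: "'k tm \<Rightarrow> 'k \<Rightarrow> complex" where
  "val ps r = (\<Sum>(c,n)\<leftarrow>ps. if n = r then c else 0)"

definition sc :: "complex \<Rightarrow> 'k tm \<Rightarrow> 'k tm" where
  "sc a ps = map (\<lambda>(c,n). (a*c, n)) ps"

definition lin :: "('k \<Rightarrow> 'v tm) \<Rightarrow> 'k tm \<Rightarrow> 'v tm" where
  "lin F ps = concat (map (\<lambda>(c,n). sc c (F n)) ps)"

definition keys :: "'k tm \<Rightarrow> 'k set" where
  "keys ps = set (map snd ps)"

lemma val_Nil[simp]: "val [] r = 0" by (simp add: val_def)
lemma val_Cons[simp]: "val ((c,n)#ps) r = (if n = r then c else 0) + val ps r"
  by (simp add: val_def)
lemma val_append[simp]: "val (ps @ qs) r = val ps r + val qs r"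
  by (simp add: val_def)
lemma val_sc[simp]: "val (sc a ps) r = a * val ps r"
  by (induction ps) (auto simp: sc_def algebra_simps)
lemma sc_Nil[simp]: "sc a [] = []" by (simp add: sc_def)
lemma sc_Cons[simp]: "sc a ((c,n)#ps) = (a*c,n) # sc a ps" by (simp add: sc_def)
lemma sc_append[simp]: "sc a (ps @ qs) = sc a ps @ sc a qs" by (simp add: sc_def)
lemma sc_sc[simp]: "sc a (sc b ps) = sc (a*b) ps" by (induction ps) (auto simp: sc_def)
lemma set_sc: "(c,n) \<in> set (sc a ps) \<Longrightarrow> \<exists>d. (d,n) \<in> set ps"
  by (auto simp: sc_def)
lemma lin_Nil[simp]: "lin F [] = []" by (simp add: lin_def)
lemma lin_Cons[simp]: "lin F ((c,n)#ps) = sc c (F n) @ lin F ps" by (simp add: lin_def)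
lemma lin_append[simp]: "lin F (ps @ qs) = lin F ps @ lin F qs" by (simp add: lin_def)
lemma lin_sc[simp]: "lin F (sc a ps) = sc a (lin F ps)"
  by (induction ps) auto
lemma sc_concat: "sc a (concat xs) = concat (map (sc a) xs)"
  by (induction xs) auto
lemma lin_lin: "lin F (lin G ps) = lin (\<lambda>n. lin F (G n)) ps"
  by (induction ps) auto
lemma lin_cong: "(\<And>c n. (c,n) \<in> set ps \<Longrightarrow> F n = G n) \<Longrightarrow> lin F ps = lin G ps"
proof (induction ps)
  case (Cons p ps)
  obtain c n where p: "p = (c,n)" by force
  have "F n = G n" using Cons.prems p by auto
  then show ?case using Cons p by auto
qed simp
lemma val_lin: "val (lin F ps) r = (\<Sum>(c,n)\<leftarrow>ps. c * val (F n) r)"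
  by (induction ps) auto
lemma keys_Cons[simp]: "keys ((c,n)#ps) = insert n (keys ps)" by (simp add: keys_def)
lemma keys_Nil[simp]: "keys [] = {}" by (simp add: keys_def)
lemma finite_keys[simp]: "finite (keys ps)" by (simp add: keys_def)
lemma val_nz_keys: "val ps r \<noteq> 0 \<Longrightarrow> r \<in> keys ps"
  by (induction ps) (auto split: if_splits)

lemma sumlist_keys:
  assumes "finite N" "keys ps \<subseteq> N"
  shows "(\<Sum>(c,n)\<leftarrow>ps. c * G n) = (\<Sum>n\<in>N. val ps n * G n)"
  using assms(2)
proof (induction ps)
  case Nil then show ?case by simp
next
  case (Cons p ps)
  obtain c n0 where p: "p = (c,n0)" by force
  have n0: "n0 \<in> N" using Cons.prems p by auto
  have "(\<Sum>n\<in>N. val (p#ps) n * G n) = (\<Sum>n\<in>N. (if n0 = n then c * G n else 0) + val ps n * G n)"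
    by (rule sum.cong) (auto simp: p algebra_simps)
  also have "\<dots> = c * G n0 + (\<Sum>n\<in>N. val ps n * G n)"
    using n0 assms(1) by (simp add: sum.distrib)
  finally show ?case using Cons p by auto
qed

lemma val_lin_keys: "finite N \<Longrightarrow> keys ps \<subseteq> N \<Longrightarrow> val (lin F ps) r = (\<Sum>n\<in>N. val ps n * val (F n) r)"
  by (simp add: val_lin sumlist_keys)

lemma lin_val_cong:
  assumes "\<And>n. val ps n = val qs n"
  shows "val (lin F ps) r = val (lin F qs) r"
  using val_lin_keys[of "keys ps \<union> keys qs" ps F r] val_lin_keys[of "keys ps \<union> keys qs" qs F r] assms
  by simp

lemma lin_Fcong: "(\<And>c n r. (c,n) \<in> set ps \<Longrightarrow> val (F n) r = val (G n) r) \<Longrightarrow> val (lin F ps) r = val (lin G ps) r"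
proof (induction ps)
  case (Cons p ps)
  obtain c n where p: "p = (c,n)" by force
  have "val (F n) r = val (G n) r" using Cons.prems p by auto
  then show ?case using Cons p by auto
qed simp

lemma lin_val_cong2:
  assumes "\<And>n. val ps n = val qs n" "\<And>c n r. (c,n) \<in> set qs \<Longrightarrow> val (F n) r = val (G n) r"
  shows "val (lin F ps) r = val (lin G qs) r"
proof -
  have "val (lin F ps) r = val (lin F qs) r" by (rule lin_val_cong) (rule assms)
  also have "\<dots> = val (lin G qs) r" using assms(2) by (rule lin_Fcong)
  finally show ?thesis .
qed


lemma sum_list_swap: "(\<Sum>x\<leftarrow>xs. \<Sum>y\<leftarrow>ys. f x y) = (\<Sum>y\<leftarrow>ys. \<Sum>x\<leftarrow>xs. (f x y :: complex))"
  by (induction xs) (auto simp: sum_list_addf)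

lemma lin_swap: "val (lin (\<lambda>n. lin (\<lambda>a. H a n) ts) ps) r = val (lin (\<lambda>a. lin (H a) ps) ts) r"
proof -
  have "val (lin (\<lambda>n. lin (\<lambda>a. H a n) ts) ps) r = (\<Sum>x\<leftarrow>ps. \<Sum>y\<leftarrow>ts. fst x * (fst y * val (H (snd y) (snd x)) r))"
    by (simp add: val_lin split_def sum_list_const_mult[symmetric] mult.assoc)
  also have "\<dots> = (\<Sum>y\<leftarrow>ts. \<Sum>x\<leftarrow>ps. fst x * (fst y * val (H (snd y) (snd x)) r))"
    by (rule sum_list_swap)
  also have "\<dots> = val (lin (\<lambda>a. lin (H a) ps) ts) r"
    by (simp add: val_lin split_def sum_list_const_mult[symmetric] algebra_simps)
  finally show ?thesis .
qed


definition allm :: "('k \<Rightarrow> bool) \<Rightarrow> 'k tm \<Rightarrow> bool" where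
  "allm P ps = (\<forall>p\<in>set ps. P (snd p))"

lemma allm_Nil[simp]: "allm P []" by (simp add: allm_def)
lemma allm_Cons[simp]: "allm P ((c,n)#ps) = (P n \<and> allm P ps)" by (simp add: allm_def)
lemma allm_append[simp]: "allm P (ps @ qs) = (allm P ps \<and> allm P qs)" by (auto simp: allm_def)
lemma allm_sc[simp]: "allm P (sc a ps) = allm P ps" unfolding allm_def sc_def by (induction ps) auto
lemma allm_tl: "allm P ps \<Longrightarrow> allm P (tl ps)" by (cases ps) (simp_all add: allm_def)
lemma allm_lin: "(\<And>c n. (c,n) \<in> set ps \<Longrightarrow> allm P (F n)) \<Longrightarrow> allm P (lin F ps)"
proof (induction ps)
  case (Cons p ps)
  obtain c n where p: "p = (c,n)" by force
  have "allm P (F n)" using Cons.prems p by auto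
  moreover have "\<And>c' n'. (c',n') \<in> set ps \<Longrightarrow> allm P (F n')" using Cons.prems by auto
  then have "allm P (lin F ps)" by (rule Cons.IH)
  ultimately show ?case using p by simp
qed simp
lemma allm_mono: "allm P ps \<Longrightarrow> (\<And>n. P n \<Longrightarrow> Q n) \<Longrightarrow> allm Q ps"
  by (auto simp: allm_def)
lemma allm_mem: "allm P ps \<Longrightarrow> (c,n) \<in> set ps \<Longrightarrow> P n"
  by (auto simp: allm_def)
lemma allm_keys: "allm P ps \<Longrightarrow> n \<in> keys ps \<Longrightarrow> P n"
  unfolding allm_def keys_def by force
lemma allm_val: "allm P ps \<Longrightarrow> val ps n \<noteq> 0 \<Longrightarrow> P n"
  by (meson allm_keys val_nz_keys)


fun brt :: "hv \<Rightarrow> hv \<Rightarrow> hv tm" where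
  "brt (L m) (L n) = [(of_int (n - m), L (m + n))] @ (if n = - m then [(of_int (m^3 - m) / 12, Z1)] else [])"
| "brt (I m) (I n) = (if n = - m then [(of_int m, Z3)] else [])"
| "brt (L m) (I n) = [(of_int n, I (m + n))] @ (if n = - m then [(of_int (m^2 + m), Z2)] else [])"
| "brt (I n) (L m) = [(- of_int n, I (m + n))] @ (if m = - n then [(- of_int (m^2 + m), Z2)] else [])"
| "brt _ _ = []"

lemma hv_br_val: "hv_br x y z = val (brt x y) z"
  by (cases x; cases y; cases z) (auto simp: add_eq_0_iff)

lemma brt_anti: "val (brt x y) z = - val (brt y x) z"
  by (cases x; cases y; cases z) (auto simp: field_simps)

lemma jacobi: "val (lin (\<lambda>a. brt a y) (brt x (L k)) @ lin (\<lambda>b. brt x b) (brt y (L k))) w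
     = val (lin (\<lambda>z. brt z (L k)) (brt x y)) w"
  apply (cases x; cases y; cases w)
  apply auto
  apply (simp_all add: field_simps)
  apply (simp_all add: algebra_simps power3_eq_cube power2_eq_square)
  done


locale FH =
  fixes ph :: "hv \<Rightarrow> complex"
  assumes phZ3: "ph Z3 = 0" and phZ2: "ph Z2 = 0"
begin

primrec A :: "nat \<Rightarrow> hv \<Rightarrow> int list \<Rightarrow> int list tm" where
  "A 0 x m = (case x of L i \<Rightarrow> (if m = [] then [(1,[i])] else [])
      | I n \<Rightarrow> (if m = [] then [(ph (I n), [])] else []) | _ \<Rightarrow> [(ph x, m)])"
| "A (Suc d) x m = (case x of
      L i \<Rightarrow> (case m of [] \<Rightarrow> [(1,[i])] | j # m' \<Rightarrow>
         (if i \<le> j then [(1, i#m)] else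
            (1, j # insort i m') # lin (A d (L j)) (tl (A d (L i) m')) @ sc (of_int (j-i)) (A d (L (i+j)) m')
            @ (if j = -i then [(of_int (i^3-i)/12 * ph Z1, m')] else [])))
    | I n \<Rightarrow> (case m of [] \<Rightarrow> [(ph (I n), [])] | j # m' \<Rightarrow>
         lin (A d (L j)) (A d (I n) m') @ sc (- of_int n) (A d (I (j+n)) m')
            @ (if j = -n then [(- of_int (j^2+j) * ph Z2, m')] else []))
    | _ \<Rightarrow> [(ph x, m)])"

lemma A_L_Nil[simp]: "A d (L i) [] = [(1,[i])]" by (cases d) simp_all
lemma A_I_Nil[simp]: "A d (I n) [] = [(ph (I n), [])]" by (cases d) simp_all
lemma A_Z1[simp]: "A d Z1 m = [(ph Z1, m)]" by (cases d) simp_all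
lemma A_Z2[simp]: "A d Z2 m = [(ph Z2, m)]" by (cases d) simp_all
lemma A_Z3[simp]: "A d Z3 m = [(ph Z3, m)]" by (cases d) simp_all
lemma A_0_L_Cons[simp]: "A 0 (L i) (j#m) = []" by simp
lemma A_0_I_Cons[simp]: "A 0 (I n) (j#m) = []" by simp
lemma A_Suc_L_Cons[simp]: "A (Suc d) (L i) (j#m) = (if i \<le> j then [(1, i#j#m)] else
            (1, j # insort i m) # lin (A d (L j)) (tl (A d (L i) m)) @ sc (of_int (j-i)) (A d (L (i+j)) m)
            @ (if j = -i then [(of_int (i^3-i)/12 * ph Z1, m)] else []))" by simp
lemma A_Suc_I_Cons[simp]: "A (Suc d) (I n) (j#m) = lin (A d (L j)) (A d (I n) m) @ sc (- of_int n) (A d (I (j+n)) m)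
            @ (if j = -n then [(- of_int (j^2+j) * ph Z2, m)] else [])" by simp
declare A.simps[simp del]

definition rho :: "hv \<Rightarrow> int list \<Rightarrow> int list tm" where
  "rho x m = A (length m) x m"

definition R :: "hv \<Rightarrow> int list tm \<Rightarrow> int list tm" where
  "R x ps = lin (rho x) ps"

definition Rb :: "hv \<Rightarrow> hv \<Rightarrow> int list \<Rightarrow> int list tm" where
  "Rb x y m = lin (\<lambda>a. rho a m) (brt x y)"

definition isL :: "hv \<Rightarrow> bool" where "isL x = (\<exists>i. x = L i)"

lemma A_shape:
  "length m \<le> d \<Longrightarrow> (\<forall>i. A d (L i) m = (1, insort i m) # tl (A d (L i) m)
      \<and> allm (\<lambda>n. length n \<le> length m) (tl (A d (L i) m)))
    \<and> (\<forall>x. \<not> isL x \<longrightarrow> allm (\<lambda>n. length n \<le> length m) (A d x m))"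
proof (induction d arbitrary: m)
  case 0
  then have m: "m = []" by simp
  show ?case
  proof (intro conjI allI impI)
    fix x assume "\<not> isL x"
    then show "allm (\<lambda>n. length n \<le> length m) (A 0 x m)"
      by (cases x) (simp_all add: m isL_def)
  qed (simp_all add: m)
next
  case (Suc d)
  show ?case
  proof (cases m)
    case Nil
    show ?thesis
    proof (intro conjI allI impI)
      fix x assume "\<not> isL x"
      then show "allm (\<lambda>n. length n \<le> length m) (A (Suc d) x m)"
        by (cases x) (simp_all add: Nil isL_def)
    qed (simp_all add: Nil)
  next
    case (Cons j m')
    have lm: "length m' \<le> d" using Suc.prems Cons by simp
    have IH: "\<And>n. length n \<le> d \<Longrightarrow> (\<forall>i. A d (L i) n = (1, insort i n) # tl (A d (L i) n)
      \<and> allm (\<lambda>r. length r \<le> length n) (tl (A d (L i) n)))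
      \<and> (\<forall>x. \<not> isL x \<longrightarrow> allm (\<lambda>r. length r \<le> length n) (A d x n))"
      by (rule Suc.IH)
    have IHL: "\<And>n i. length n \<le> d \<Longrightarrow> A d (L i) n = (1, insort i n) # tl (A d (L i) n)"
      using IH by simp
    have IHT: "\<And>n i. length n \<le> d \<Longrightarrow> allm (\<lambda>r. length r \<le> length n) (tl (A d (L i) n))"
      using IH by simp
    have IHN: "\<And>n x. length n \<le> d \<Longrightarrow> \<not> isL x \<Longrightarrow> allm (\<lambda>r. length r \<le> length n) (A d x n)"
      using IH by simp
    have Lb: "\<And>i n. length n \<le> d \<Longrightarrow> allm (\<lambda>r. length r \<le> Suc (length n)) (A d (L i) n)"
    proof -
      fix i n
      assume h: "length (n::int list) \<le> d"
      have e: "A d (L i) n = (1, insort i n) # tl (A d (L i) n)" by (rule IHL[OF h])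
      have t: "allm (\<lambda>r. length r \<le> length n) (tl (A d (L i) n))" by (rule IHT[OF h])
      have "allm (\<lambda>r. length r \<le> Suc (length n)) (tl (A d (L i) n))" by (rule allm_mono[OF t]) simp
      then show "allm (\<lambda>r. length r \<le> Suc (length n)) (A d (L i) n)"
        by (subst e) simp
    qed
    have P1: "\<forall>i. A (Suc d) (L i) m = (1, insort i m) # tl (A (Suc d) (L i) m)
      \<and> allm (\<lambda>n. length n \<le> length m) (tl (A (Suc d) (L i) m))"
    proof
      fix i
      show "A (Suc d) (L i) m = (1, insort i m) # tl (A (Suc d) (L i) m)
        \<and> allm (\<lambda>n. length n \<le> length m) (tl (A (Suc d) (L i) m))"
      proof (cases "i \<le> j")
        case True
        then show ?thesis using Cons by (simp del: A_Suc_L_Cons add: A_Suc_L_Cons[of d i j m'])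
      next
        case False
        have a1: "allm (\<lambda>n. length n \<le> length m) (lin (A d (L j)) (tl (A d (L i) m')))"
        proof (rule allm_lin)
          fix c n assume "(c,n) \<in> set (tl (A d (L i) m'))"
          then have ln: "length n \<le> length m'" using IHT[OF lm] by (rule allm_mem[rotated])
          show "allm (\<lambda>n. length n \<le> length m) (A d (L j) n)"
            by (rule allm_mono[OF Lb[of n j]]) (use ln lm Cons in simp_all)
        qed
        have a2: "allm (\<lambda>n. length n \<le> length m) (A d (L (i+j)) m')"
          by (rule allm_mono[OF Lb[OF lm, of "i+j"]]) (use Cons in simp)
        show ?thesis using False Cons a1 a2 by simp
      qed
    qed
    have P2: "\<forall>x. \<not> isL x \<longrightarrow> allm (\<lambda>n. length n \<le> length m) (A (Suc d) x m)"
    proof (intro allI impI)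
      fix x assume nx: "\<not> isL x"
      show "allm (\<lambda>n. length n \<le> length m) (A (Suc d) x m)"
      proof (cases x)
        case (I n)
        have nI: "\<not> isL (I n)" "\<not> isL (I (j+n))" by (auto simp: isL_def)
        have a1: "allm (\<lambda>n. length n \<le> length m) (lin (A d (L j)) (A d (I n) m'))"
        proof (rule allm_lin)
          fix c r assume "(c,r) \<in> set (A d (I n) m')"
          then have ln: "length r \<le> length m'" using IHN[OF lm nI(1)] by (rule allm_mem[rotated])
          show "allm (\<lambda>n. length n \<le> length m) (A d (L j) r)"
            by (rule allm_mono[OF Lb[of r j]]) (use ln lm Cons in simp_all)
        qed
        have a2: "allm (\<lambda>r. length r \<le> length m) (A d (I (j+n)) m')"
          by (rule allm_mono[of "\<lambda>r. length r \<le> length m'"]) (use IHN[OF lm nI(2)] Cons in simp_all)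
        show ?thesis using I Cons a1 a2 by simp
      qed (use nx Cons in \<open>simp_all add: isL_def\<close>)
    qed
    show ?thesis using P1 P2 by blast
  qed
qed


lemma A_shapeL: "length m \<le> d \<Longrightarrow> A d (L i) m = (1, insort i m) # tl (A d (L i) m)"
  by (rule conjunct1[OF A_shape, THEN spec[of _ i], THEN conjunct1])
lemma A_shapeT: "length m \<le> d \<Longrightarrow> allm (\<lambda>n. length n \<le> length m) (tl (A d (L i) m))"
  by (rule conjunct1[OF A_shape, THEN spec[of _ i], THEN conjunct2])
lemma A_shapeN: "length m \<le> d \<Longrightarrow> \<not> isL x \<Longrightarrow> allm (\<lambda>n. length n \<le> length m) (A d x m)"
  by (rule conjunct2[OF A_shape, THEN spec[of _ x], THEN mp])

lemma A_Suc: "length m \<le> d \<Longrightarrow> A (Suc d) x m = A d x m"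
proof (induction d arbitrary: x m)
  case 0
  then have m: "m = []" by simp
  show ?case by (cases x) (simp_all add: m)
next
  case (Suc d)
  show ?case
  proof (cases m)
    case Nil
    show ?thesis by (cases x) (simp_all add: Nil)
  next
    case (Cons j m')
    have lm: "length m' \<le> d" using Suc.prems Cons by simp
    have IH: "\<And>x n. length n \<le> d \<Longrightarrow> A (Suc d) x n = A d x n" by (rule Suc.IH)
    show ?thesis
    proof (cases x)
      case (L i)
      have e1: "A (Suc d) (L i) m' = A d (L i) m'" by (rule IH[OF lm])
      have e2: "A (Suc d) (L (i+j)) m' = A d (L (i+j)) m'" by (rule IH[OF lm])
      have e3: "lin (A (Suc d) (L j)) (tl (A d (L i) m')) = lin (A d (L j)) (tl (A d (L i) m'))"
      proof (rule lin_cong)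
        fix c n assume "(c,n) \<in> set (tl (A d (L i) m'))"
        then have "length n \<le> length m'" using A_shapeT[OF lm] by (rule allm_mem[rotated])
        then show "A (Suc d) (L j) n = A d (L j) n" using IH lm by simp
      qed
      show ?thesis using L Cons e1 e2 e3 by simp
    next
      case (I n)
      have e1: "A (Suc d) (I n) m' = A d (I n) m'" by (rule IH[OF lm])
      have e2: "A (Suc d) (I (j+n)) m' = A d (I (j+n)) m'" by (rule IH[OF lm])
      have nI: "\<not> isL (I n)" by (simp add: isL_def)
      have e3: "lin (A (Suc d) (L j)) (A d (I n) m') = lin (A d (L j)) (A d (I n) m')"
      proof (rule lin_cong)
        fix c r assume "(c,r) \<in> set (A d (I n) m')"
        then have "length r \<le> length m'" using A_shapeN[OF lm nI] by (rule allm_mem[rotated])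
        then show "A (Suc d) (L j) r = A d (L j) r" using IH lm by simp
      qed
      show ?thesis using I Cons e1 e2 e3 by simp
    qed simp_all
  qed
qed

lemma A_stable: "length m \<le> d \<Longrightarrow> A d x m = rho x m"
proof (induction d)
  case 0
  then show ?case by (simp add: rho_def)
next
  case (Suc d)
  show ?case
  proof (cases "length m = Suc d")
    case True then show ?thesis by (simp add: rho_def)
  next
    case False
    then have "length m \<le> d" using Suc.prems by simp
    then show ?thesis using Suc.IH A_Suc by simp
  qed
qed

lemma rho_L_shape: "rho (L i) m = (1, insort i m) # tl (rho (L i) m)"
  unfolding rho_def by (rule A_shapeL) simp
lemma rho_L_tl: "allm (\<lambda>r. length r \<le> length m) (tl (rho (L i) m))"
  unfolding rho_def by (rule A_shapeT) simp
lemma rho_nL: "\<not> isL x \<Longrightarrow> allm (\<lambda>r. length r \<le> length m) (rho x m)"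
  unfolding rho_def by (rule A_shapeN) simp_all
lemma rho_L_len: "allm (\<lambda>r. length r \<le> Suc (length m)) (rho (L i) m)"
proof -
  have "allm (\<lambda>r. length r \<le> Suc (length m)) (tl (rho (L i) m))"
    by (rule allm_mono[OF rho_L_tl]) simp
  then show ?thesis by (subst rho_L_shape) simp
qed
lemma rho_I_len: "allm (\<lambda>r. length r \<le> length m) (rho (I n) m)"
  by (rule rho_nL) (simp add: isL_def)

lemma rho_L_Nil[simp]: "rho (L i) [] = [(1,[i])]" by (simp add: rho_def)
lemma rho_I_Nil[simp]: "rho (I n) [] = [(ph (I n), [])]" by (simp add: rho_def)
lemma rho_Z1[simp]: "rho Z1 m = [(ph Z1, m)]" by (simp add: rho_def)
lemma rho_Z2[simp]: "rho Z2 m = [(ph Z2, m)]" by (simp add: rho_def)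
lemma rho_Z3[simp]: "rho Z3 m = [(ph Z3, m)]" by (simp add: rho_def)

lemma rho_L_Cons: "rho (L i) (j#m) = (if i \<le> j then [(1, i#j#m)] else
            (1, j # insort i m) # R (L j) (tl (rho (L i) m)) @ sc (of_int (j-i)) (rho (L (i+j)) m)
            @ (if j = -i then [(of_int (i^3-i)/12 * ph Z1, m)] else []))"
proof -
  have e3: "lin (A (length m) (L j)) (tl (rho (L i) m)) = R (L j) (tl (rho (L i) m))"
    unfolding R_def
  proof (rule lin_cong)
    fix c n assume "(c,n) \<in> set (tl (rho (L i) m))"
    then have "length n \<le> length m" using rho_L_tl by (rule allm_mem[rotated])
    then show "A (length m) (L j) n = rho (L j) n" by (rule A_stable)
  qed
  show ?thesis unfolding rho_def[of _ "j#m"] using e3 by (simp add: rho_def[symmetric])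
qed

lemma rho_I_Cons: "rho (I n) (j#m) = R (L j) (rho (I n) m) @ sc (- of_int n) (rho (I (j+n)) m)
            @ (if j = -n then [(- of_int (j^2+j) * ph Z2, m)] else [])"
proof -
  have e3: "lin (A (length m) (L j)) (rho (I n) m) = R (L j) (rho (I n) m)"
    unfolding R_def
  proof (rule lin_cong)
    fix c r assume "(c,r) \<in> set (rho (I n) m)"
    then have "length r \<le> length m" using rho_I_len by (rule allm_mem[rotated])
    then show "A (length m) (L j) r = rho (L j) r" by (rule A_stable)
  qed
  show ?thesis unfolding rho_def[of _ "j#m"] using e3 by (simp add: rho_def[symmetric])
qed

lemma A_sorted: "sorted m \<Longrightarrow> allm sorted (A d x m)"
proof (induction d arbitrary: x m)
  case 0
  then show ?case by (cases x) (simp_all add: A.simps)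
next
  case (Suc d)
  show ?case
  proof (cases m)
    case Nil
    show ?thesis by (cases x) (simp_all add: Nil)
  next
    case (Cons j m')
    have sm: "sorted m'" and jm: "\<forall>e\<in>set m'. j \<le> e" using Suc.prems Cons by auto
    have IH: "\<And>x n. sorted n \<Longrightarrow> allm sorted (A d x n)" by (rule Suc.IH)
    show ?thesis
    proof (cases x)
      case (L i)
      show ?thesis
      proof (cases "i \<le> j")
        case True
        then have "\<forall>e\<in>set m'. i \<le> e" using jm by fastforce
        then show ?thesis using L Cons Suc.prems jm True by simp
      next
        case False
        have s1: "sorted (j # insort i m')" using False jm sm by (simp add: sorted_insort set_insort_key)
        have s2: "allm sorted (lin (A d (L j)) (tl (A d (L i) m')))"
        proof (rule allm_lin)
          fix c n assume "(c,n) \<in> set (tl (A d (L i) m'))"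
          then have "sorted n" using allm_tl[OF IH[OF sm]] by (rule allm_mem[rotated])
          then show "allm sorted (A d (L j) n)" by (rule IH)
        qed
        show ?thesis using L Cons False s1 s2 IH[OF sm] sm by simp
      qed
    next
      case (I n)
      have s2: "allm sorted (lin (A d (L j)) (A d (I n) m'))"
      proof (rule allm_lin)
        fix c r assume "(c,r) \<in> set (A d (I n) m')"
        then have "sorted r" using IH[OF sm] by (rule allm_mem[rotated])
        then show "allm sorted (A d (L j) r)" by (rule IH)
      qed
      show ?thesis using I Cons s2 IH[OF sm] sm by simp
    qed (use Suc.prems in simp_all)
  qed
qed

lemma rho_sorted: "sorted m \<Longrightarrow> allm sorted (rho x m)"
  unfolding rho_def by (rule A_sorted)

lemma R_sorted: "allm sorted ps \<Longrightarrow> allm sorted (R x ps)"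
  unfolding R_def by (rule allm_lin) (rule rho_sorted, rule allm_mem, assumption+)

end

context FH begin

lemma val_lin_appF: "val (lin (\<lambda>n. F n @ G n) ps) r = val (lin F ps) r + val (lin G ps) r"
  by (induction ps) (auto simp: algebra_simps)

lemma R_app[simp]: "R x (ps @ qs) = R x ps @ R x qs" by (simp add: R_def)
lemma R_Nil[simp]: "R x [] = []" by (simp add: R_def)
lemma R_Cons: "R x ((c,n)#ps) = sc c (rho x n) @ R x ps" by (simp add: R_def)
lemma R_sc[simp]: "R x (sc a ps) = sc a (R x ps)" by (simp add: R_def)

lemma R_cong: "(\<And>n. val ps n = val qs n) \<Longrightarrow> val (R x ps) r = val (R x qs) r"
  unfolding R_def by (rule lin_val_cong)

lemma insort_lo: "\<forall>e\<in>set m. j \<le> e \<Longrightarrow> insort j m = j # m"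
  by (cases m) auto

lemma lo_L: "\<forall>e\<in>set n. j \<le> e \<Longrightarrow> rho (L j) n = [(1, j#n)]"
  by (cases n) (auto simp: rho_L_Cons)

lemma rho_nL_Nil: "\<not> isL x \<Longrightarrow> rho x [] = [(ph x, [])]"
  by (cases x) (auto simp: isL_def)

lemma caseA:
  assumes sm: "sorted m" and jm: "\<forall>e\<in>set m. j \<le> e"
  shows "val (rho x (j#m)) r = val (R (L j) (rho x m) @ Rb x (L j) m) r"
proof (cases x)
  case (L i)
  show ?thesis
  proof (cases "i \<le> j")
    case False
    have lo: "\<forall>e\<in>set (insort i m). j \<le> e" using False jm by (auto simp: set_insort_key)
    have e1: "R (L j) (rho (L i) m) = sc 1 [(1, j # insort i m)] @ R (L j) (tl (rho (L i) m))"
      by (subst rho_L_shape) (simp add: R_Cons lo_L[OF lo])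
    show ?thesis using False L e1 by (simp add: rho_L_Cons Rb_def)
  next
    case True
    show ?thesis
    proof (cases "i = j")
      case True
      then show ?thesis using L jm by (simp add: rho_L_Cons Rb_def R_Cons lo_L)
    next
      case False
      then have ij: "i < j" using \<open>i \<le> j\<close> by simp
      have lo: "\<forall>e\<in>set m. i \<le> e" using jm ij by fastforce
      have e0: "rho (L i) m = [(1, i#m)]" by (rule lo_L[OF lo])
      have e1: "rho (L j) (i#m) = (1, i # j # m) # sc (of_int (i-j)) (rho (L (i+j)) m)
            @ (if i = -j then [(of_int (j^3-j)/12 * ph Z1, m)] else [])"
        using ij jm by (simp add: rho_L_Cons lo_L insort_lo add.commute)
      show ?thesis
      proof (cases "j = -i")
        case True
        then show ?thesis using L ij e0 e1 by (simp add: rho_L_Cons Rb_def R_Cons algebra_simps flip: add_divide_distrib)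
      next
        case False
        then have "i \<noteq> -j" by auto
        then show ?thesis using L ij e0 e1 False by (simp add: rho_L_Cons Rb_def R_Cons algebra_simps)
      qed
    qed
  qed
next
  case (I n)
  then show ?thesis by (simp add: rho_I_Cons Rb_def)
next
  case Z1
  then show ?thesis using jm by (simp add: Rb_def R_Cons lo_L)
next
  case Z2
  then show ?thesis using jm by (simp add: Rb_def R_Cons lo_L)
next
  case Z3
  then show ?thesis using jm by (simp add: Rb_def R_Cons lo_L)
qed

lemma caseA':
  assumes sm: "sorted m" and jm: "\<forall>e\<in>set m. j \<le> e"
  shows "val (R x (rho (L j) m)) r = val (R (L j) (rho x m) @ Rb x (L j) m) r"
  using caseA[OF assms, of x r] by (simp add: lo_L[OF jm] R_Cons)

lemma Rb_anti: "val (Rb x y m) r = - val (Rb y x m) r"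
proof -
  let ?N = "keys (brt x y) \<union> keys (brt y x)"
  have "val (Rb x y m) r = (\<Sum>n\<in>?N. val (brt x y) n * val (rho n m) r)"
    unfolding Rb_def by (rule val_lin_keys) auto
  also have "\<dots> = (\<Sum>n\<in>?N. - (val (brt y x) n * val (rho n m) r))"
    by (rule sum.cong) (simp_all add: brt_anti[of x y])
  also have "\<dots> = - val (Rb y x m) r"
    unfolding Rb_def by (subst val_lin_keys[of ?N]) (auto simp: sum_negf)
  finally show ?thesis .
qed

lemma Rb_nL_Nil: "\<not> isL x \<Longrightarrow> \<not> isL y \<Longrightarrow> val (Rb x y []) r = 0"
  by (cases x; cases y) (auto simp: isL_def Rb_def phZ3)


lemma mono_prop:
  assumes smk: "sorted (k#m')" and nv: "\<not> (\<exists>i. y = L i \<and> i \<le> k)"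
  shows "allm (\<lambda>n. (\<forall>e\<in>set n. k \<le> e) \<or> length n \<le> length m') (rho y m')"
proof (cases "isL y")
  case True
  then obtain i where y: "y = L i" by (auto simp: isL_def)
  then have ki: "k < i" using nv by auto
  have km: "\<forall>e\<in>set m'. k \<le> e" using smk by simp
  have t: "allm (\<lambda>n. (\<forall>e\<in>set n. k \<le> e) \<or> length n \<le> length m') (tl (rho (L i) m'))"
    by (rule allm_mono[OF rho_L_tl]) simp
  have h: "\<forall>e\<in>set (insort i m'). k \<le> e" using ki km by (auto simp: set_insort_key)
  show ?thesis unfolding y by (subst rho_L_shape) (simp add: t h)
next
  case False
  show ?thesis by (rule allm_mono[OF rho_nL[OF False]]) simp
qed

lemma Cmain: "sorted m \<Longrightarrow> val (R x (rho y m)) r = val (R y (rho x m)) r + val (Rb x y m) r"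
proof (induction "length m" arbitrary: m x y r rule: less_induct)
  case less
  note sm = less.prems
  have IH: "\<And>m' x y r. length m' < length m \<Longrightarrow> sorted m' \<Longrightarrow>
      val (R x (rho y m')) r = val (R y (rho x m')) r + val (Rb x y m') r"
    by (rule less.hyps)
  show ?case
  proof (cases "\<exists>j. y = L j \<and> (\<forall>e\<in>set m. j \<le> e)")
    case True
    then obtain j where y: "y = L j" and jm: "\<forall>e\<in>set m. j \<le> e" by blast
    show ?thesis using caseA'[OF sm jm, of x r] by (simp add: y)
  next
    case nY: False
    show ?thesis
    proof (cases "\<exists>i. x = L i \<and> (\<forall>e\<in>set m. i \<le> e)")
      case True
      then obtain i where x: "x = L i" and im: "\<forall>e\<in>set m. i \<le> e" by blast
      have "val (R y (rho (L i) m)) r = val (R (L i) (rho y m)) r + val (Rb y (L i) m) r"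
        using caseA'[OF sm im, of y r] by simp
      then show ?thesis using Rb_anti[of y "L i" m r] by (simp add: x)
    next
      case nX: False
      show ?thesis
      proof (cases m)
        case Nil
        have "\<not> isL x" "\<not> isL y" using nX nY Nil by (auto simp: isL_def)
        then show ?thesis using Nil by (simp add: rho_nL_Nil R_Cons Rb_nL_Nil algebra_simps)
      next
        case (Cons k m')
        have smk: "sorted (k#m')" using sm Cons by simp
        have sm': "sorted m'" and km: "\<forall>e\<in>set m'. k \<le> e" using smk by auto
        have lt: "length m' < length m" using Cons by simp
        have nsX: "\<not> (\<exists>i. x = L i \<and> i \<le> k)"
        proof
          assume "\<exists>i. x = L i \<and> i \<le> k"
          then obtain i where "x = L i" "i \<le> k" by blast
          then have "\<forall>e\<in>set m. i \<le> e" using km Cons by fastforce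
          then show False using nX \<open>x = L i\<close> by blast
        qed
        have nsY: "\<not> (\<exists>i. y = L i \<and> i \<le> k)"
        proof
          assume "\<exists>i. y = L i \<and> i \<le> k"
          then obtain i where "y = L i" "i \<le> k" by blast
          then have "\<forall>e\<in>set m. i \<le> e" using km Cons by fastforce
          then show False using nY \<open>y = L i\<close> by blast
        qed
        have expand: "val (R u (rho v m)) r = val (R (L k) (R u (rho v m'))) r
            + val (lin (\<lambda>a. R a (rho v m')) (brt u (L k))) r
            + val (lin (\<lambda>b. R u (rho b m')) (brt v (L k))) r"
          if nv: "\<not> (\<exists>i. v = L i \<and> i \<le> k)" for u v r
        proof -
          have E1: "\<And>n. val (rho v m) n = val (R (L k) (rho v m') @ Rb v (L k) m') n"
            using caseA[OF sm' km, of v] Cons by simp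
          have "val (R u (rho v m)) r = val (R u (R (L k) (rho v m') @ Rb v (L k) m')) r"
            by (rule R_cong) (rule E1)
          also have "\<dots> = val (R u (R (L k) (rho v m'))) r + val (R u (Rb v (L k) m')) r" by simp
          also have "val (R u (R (L k) (rho v m'))) r = val (R (L k) (R u (rho v m'))) r
              + val (lin (\<lambda>a. R a (rho v m')) (brt u (L k))) r"
          proof -
            have "val (R u (R (L k) (rho v m'))) r = val (lin (\<lambda>n. R u (rho (L k) n)) (rho v m')) r"
              by (simp add: R_def lin_lin)
            also have "\<dots> = val (lin (\<lambda>n. R (L k) (rho u n) @ Rb u (L k) n) (rho v m')) r"
            proof (rule lin_Fcong)
              fix c n r' assume cn: "(c,n) \<in> set (rho v m')"
              have sn: "sorted n" using rho_sorted[OF sm'] cn by (rule allm_mem)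
              have "(\<forall>e\<in>set n. k \<le> e) \<or> length n \<le> length m'"
                using mono_prop[OF smk nv] cn by (rule allm_mem)
              then show "val (R u (rho (L k) n)) r' = val (R (L k) (rho u n) @ Rb u (L k) n) r'"
              proof
                assume "\<forall>e\<in>set n. k \<le> e"
                then show ?thesis by (rule caseA'[OF sn])
              next
                assume "length n \<le> length m'"
                then have "length n < length m" using lt by simp
                then show ?thesis using IH[of n u "L k" r'] sn by simp
              qed
            qed
            also have "\<dots> = val (R (L k) (R u (rho v m'))) r + val (lin (Rb u (L k)) (rho v m')) r"
              by (simp add: val_lin_appF R_def lin_lin)
            also have "val (lin (Rb u (L k)) (rho v m')) r = val (lin (\<lambda>a. R a (rho v m')) (brt u (L k))) r"
              unfolding Rb_def R_def by (rule lin_swap)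
            finally show ?thesis .
          qed
          also have "val (R u (Rb v (L k) m')) r = val (lin (\<lambda>b. R u (rho b m')) (brt v (L k))) r"
            by (simp add: R_def Rb_def lin_lin)
          finally show ?thesis by simp
        qed
        have X: "val (R x (rho y m)) r = val (R (L k) (R x (rho y m'))) r
            + val (lin (\<lambda>a. R a (rho y m')) (brt x (L k))) r
            + val (lin (\<lambda>b. R x (rho b m')) (brt y (L k))) r" by (rule expand[OF nsY])
        have Y: "val (R y (rho x m)) r = val (R (L k) (R y (rho x m'))) r
            + val (lin (\<lambda>a. R a (rho x m')) (brt y (L k))) r
            + val (lin (\<lambda>b. R y (rho b m')) (brt x (L k))) r" by (rule expand[OF nsX])
        have I1: "val (R (L k) (R x (rho y m'))) r = val (R (L k) (R y (rho x m'))) r + val (R (L k) (Rb x y m')) r"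
        proof -
          have "val (R (L k) (R x (rho y m'))) r = val (R (L k) (R y (rho x m') @ Rb x y m')) r"
            by (rule R_cong) (subst IH[OF lt sm'], simp)
          then show ?thesis by simp
        qed
        have I2: "val (lin (\<lambda>a. R a (rho y m')) (brt x (L k))) r
            = val (lin (\<lambda>a. R y (rho a m')) (brt x (L k))) r + val (lin (\<lambda>a. Rb a y m') (brt x (L k))) r"
        proof -
          have "val (lin (\<lambda>a. R a (rho y m')) (brt x (L k))) r = val (lin (\<lambda>a. R y (rho a m') @ Rb a y m') (brt x (L k))) r"
            by (rule lin_Fcong) (subst IH[OF lt sm'], simp)
          then show ?thesis by (simp add: val_lin_appF)
        qed
        have I3: "val (lin (\<lambda>b. R x (rho b m')) (brt y (L k))) r
            = val (lin (\<lambda>b. R b (rho x m')) (brt y (L k))) r + val (lin (\<lambda>b. Rb x b m') (brt y (L k))) r"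
        proof -
          have "val (lin (\<lambda>b. R x (rho b m')) (brt y (L k))) r = val (lin (\<lambda>b. R b (rho x m') @ Rb x b m') (brt y (L k))) r"
            by (rule lin_Fcong) (subst IH[OF lt sm'], simp)
          then show ?thesis by (simp add: val_lin_appF)
        qed
        have T: "val (Rb x y m) r = val (R (L k) (Rb x y m')) r + val (lin (\<lambda>z. Rb z (L k) m') (brt x y)) r"
        proof -
          have "val (Rb x y m) r = val (lin (\<lambda>z. R (L k) (rho z m') @ Rb z (L k) m') (brt x y)) r"
            unfolding Rb_def[of x y m] by (rule lin_Fcong) (simp add: Cons caseA[OF sm' km])
          also have "\<dots> = val (R (L k) (Rb x y m')) r + val (lin (\<lambda>z. Rb z (L k) m') (brt x y)) r"
            by (simp add: val_lin_appF R_def Rb_def lin_lin)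
          finally show ?thesis .
        qed
        have J: "val (lin (\<lambda>a. Rb a y m') (brt x (L k))) r + val (lin (\<lambda>b. Rb x b m') (brt y (L k))) r
            = val (lin (\<lambda>z. Rb z (L k) m') (brt x y)) r"
        proof -
          have "val (lin (\<lambda>a. Rb a y m') (brt x (L k))) r + val (lin (\<lambda>b. Rb x b m') (brt y (L k))) r
              = val (lin (\<lambda>w. rho w m') (lin (\<lambda>a. brt a y) (brt x (L k)) @ lin (\<lambda>b. brt x b) (brt y (L k)))) r"
            by (simp add: Rb_def lin_lin)
          also have "\<dots> = val (lin (\<lambda>w. rho w m') (lin (\<lambda>z. brt z (L k)) (brt x y))) r"
            by (rule lin_val_cong) (rule jacobi)
          also have "\<dots> = val (lin (\<lambda>z. Rb z (L k) m') (brt x y)) r" by (simp add: Rb_def lin_lin)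
          finally show ?thesis .
        qed
        show ?thesis
        proof -
          let ?b1 = "val (R (L k) (R y (rho x m'))) r"
          let ?c1 = "val (R (L k) (Rb x y m')) r"
          let ?b2 = "val (lin (\<lambda>a. R y (rho a m')) (brt x (L k))) r"
          let ?c2 = "val (lin (\<lambda>a. Rb a y m') (brt x (L k))) r"
          let ?b3 = "val (lin (\<lambda>b. R b (rho x m')) (brt y (L k))) r"
          let ?c3 = "val (lin (\<lambda>b. Rb x b m') (brt y (L k))) r"
          have "val (R x (rho y m)) r = (?b1 + ?c1) + (?b2 + ?c2) + (?b3 + ?c3)"
            using X I1 I2 I3 by simp
          also have "\<dots> = (?b1 + ?b3 + ?b2) + (?c1 + (?c2 + ?c3))" by (simp add: algebra_simps)
          also have "\<dots> = val (R y (rho x m)) r + val (Rb x y m) r"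
            using Y T J by simp
          finally show ?thesis .
        qed
      qed
    qed
  qed
qed

lemma C_comb: "allm sorted ps \<Longrightarrow> val (R x (R y ps)) r = val (R y (R x ps)) r + val (lin (\<lambda>z. R z ps) (brt x y)) r"
proof -
  assume s: "allm sorted ps"
  have "val (R x (R y ps)) r = val (lin (\<lambda>n. R x (rho y n)) ps) r" by (simp add: R_def lin_lin)
  also have "\<dots> = val (lin (\<lambda>n. R y (rho x n) @ Rb x y n) ps) r"
  proof (rule lin_Fcong)
    fix c n r' assume "(c,n) \<in> set ps"
    then have "sorted n" using s by (rule allm_mem[rotated])
    then show "val (R x (rho y n)) r' = val (R y (rho x n) @ Rb x y n) r'" using Cmain[of n x y r'] by simp
  qed
  also have "\<dots> = val (R y (R x ps)) r + val (lin (Rb x y) ps) r"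
    by (simp add: val_lin_appF R_def lin_lin)
  also have "val (lin (Rb x y) ps) r = val (lin (\<lambda>z. R z ps) (brt x y)) r"
    unfolding Rb_def R_def by (rule lin_swap)
  finally show ?thesis .
qed

end

lemma app_iff: "(a @ [z] @ b = v) = (length v = length a + 1 + length b \<and> take (length a) v = a
    \<and> drop (length a + 1) v = b \<and> v ! length a = z)"
proof
  assume "a @ [z] @ b = v" then show "length v = length a + 1 + length b \<and> take (length a) v = a
    \<and> drop (length a + 1) v = b \<and> v ! length a = z" by auto
next
  assume h: "length v = length a + 1 + length b \<and> take (length a) v = a
    \<and> drop (length a + 1) v = b \<and> v ! length a = z"
  then have "length a < length v" by simp
  then have "v = take (length a) v @ v ! length a # drop (Suc (length a)) v" by (rule id_take_nth_drop)
  then show "a @ [z] @ b = v" using h by simp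
qed

lemma val_mapab: "val (map (\<lambda>(c,z). (c, a @ [z] @ b)) ts) v =
   (if length v = length a + 1 + length b \<and> take (length a) v = a \<and> drop (length a + 1) v = b
    then val ts (v ! length a) else 0)"
proof (induction ts)
  case (Cons p ts)
  obtain c z where p: "p = (c,z)" by force
  let ?C = "length v = length a + 1 + length b \<and> take (length a) v = a \<and> drop (length a + 1) v = b"
  have e: "(if a @ z # b = v then c else 0) = (if ?C then (if z = v ! length a then c else 0) else 0)"
    using app_iff[of a z b v] by auto
  show ?case using Cons e by (simp add: p)
qed simp

definition RL :: "hv list \<Rightarrow> hv \<Rightarrow> hv \<Rightarrow> hv list \<Rightarrow> hv list tm" where
  "RL a x y b = [(1, a@[x,y]@b), (-1, a@[y,x]@b)] @ sc (-1) (map (\<lambda>(c,z). (c, a@[z]@b)) (brt x y))"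

lemma relv_val: "relv a x y b = val (RL a x y b)"
proof
  fix v
  show "relv a x y b v = val (RL a x y b) v"
    unfolding relv_def RL_def mono_def using val_mapab[of a b "brt x y" v]
    by (simp add: hv_br_val eq_commute[of v])
qed

lemma mono_val: "mono w = val [(1,w)]"
  by (auto simp: mono_def fun_eq_iff)

definition lx :: "hv \<Rightarrow> hv list tm \<Rightarrow> hv list tm" where
  "lx x ts = map (\<lambda>(c,w). (c, x#w)) ts"

lemma lmul_val: "lmul x (val ts) = val (lx x ts)"
proof
  fix v
  show "lmul x (val ts) v = val (lx x ts) v"
  proof (induction ts)
    case Nil then show ?case by (simp add: lmul_def lx_def split: list.split)
  next
    case (Cons p ts)
    obtain c w where p: "p = (c,w)" by force
    show ?case using Cons by (auto simp: lmul_def lx_def p split: list.split)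
  qed
qed

lemma val_finite: "finite {v. val ts v \<noteq> 0}"
  by (rule finite_subset[of _ "keys ts"]) (auto intro: val_nz_keys)

lemma val_Tfin: "val ts \<in> Tfin"
  by (simp add: Tfin_def val_finite)

lemma Tfin_val: assumes "f \<in> Tfin" shows "\<exists>ts. f = val ts"
proof -
  have "finite {w. f w \<noteq> 0}" using assms by (simp add: Tfin_def)
  then obtain xs where xs: "set xs = {w. f w \<noteq> 0}" "distinct xs" using finite_distinct_list by blast
  have "f = val (map (\<lambda>w. (f w, w)) xs)"
  proof
    fix v
    have "val (map (\<lambda>w. (f w, w)) xs) v = (\<Sum>w\<leftarrow>xs. if w = v then f w else 0)"
      by (simp add: val_def comp_def)
    also have "\<dots> = (\<Sum>w\<in>set xs. if w = v then f w else 0)"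
      using xs(2) by (simp add: sum_list_distinct_conv_sum_set)
    also have "\<dots> = f v"
    proof -
      have fin: "finite (set xs)" by simp
      show ?thesis using xs(1) sum.delta[OF fin, of v f] by (cases "f v = 0") auto
    qed
    finally show "f v = val (map (\<lambda>w. (f w, w)) xs) v" by simp
  qed
  then show ?thesis by blast
qed

lemma val_add_fun: "(\<lambda>v. val ts v + val us v) = val (ts @ us)" by auto
lemma val_smult_fun: "(\<lambda>v. c * val ts v) = val (sc c ts)" by auto

context FH begin

definition RA :: "hv list \<Rightarrow> int list tm \<Rightarrow> int list tm" where
  "RA a ps = foldr R a ps"

definition Phi :: "hv list \<Rightarrow> int list tm" where
  "Phi w = RA w [(1,[])]"

definition PhiT :: "hv list tm \<Rightarrow> int list tm" where
  "PhiT ts = lin Phi ts"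

lemma RA_Nil[simp]: "RA [] ps = ps" by (simp add: RA_def)
lemma RA_Nil2[simp]: "RA a [] = []" by (induction a) (auto simp: RA_def)
lemma RA_Cons[simp]: "RA (x#a) ps = R x (RA a ps)" by (simp add: RA_def)
lemma RA_append: "RA (a @ b) ps = RA a (RA b ps)" by (simp add: RA_def)
lemma RA_app[simp]: "RA a (ps @ qs) = RA a ps @ RA a qs" by (induction a) auto
lemma RA_sc[simp]: "RA a (sc c ps) = sc c (RA a ps)" by (induction a) auto
lemma RA_lin: "RA a (lin G ts) = lin (\<lambda>z. RA a (G z)) ts"
  by (induction a) (auto simp: R_def lin_lin)
lemma RA_cong: "(\<And>n. val ps n = val qs n) \<Longrightarrow> val (RA a ps) r = val (RA a qs) r"
proof (induction a arbitrary: r)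
  case (Cons x a)
  then show ?case by simp (rule R_cong, blast)
qed simp

lemma Phi_Nil[simp]: "Phi [] = [(1,[])]" by (simp add: Phi_def)
lemma Phi_Cons[simp]: "Phi (x#w) = R x (Phi w)" by (simp add: Phi_def)
lemma Phi_append: "Phi (a @ w) = RA a (Phi w)" by (simp add: Phi_def RA_append)
lemma Phi_sorted: "allm sorted (Phi w)"
  by (induction w) (auto intro: R_sorted)

lemma PhiT_Nil[simp]: "PhiT [] = []" by (simp add: PhiT_def)
lemma PhiT_Cons[simp]: "PhiT ((c,w)#ts) = sc c (Phi w) @ PhiT ts" by (simp add: PhiT_def)
lemma PhiT_app[simp]: "PhiT (ts @ us) = PhiT ts @ PhiT us" by (simp add: PhiT_def)
lemma PhiT_sc[simp]: "PhiT (sc c ts) = sc c (PhiT ts)" by (simp add: PhiT_def)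
lemma PhiT_lx: "PhiT (lx x ts) = R x (PhiT ts)"
  by (induction ts) (auto simp: lx_def)
lemma PhiT_cong: "(\<And>v. val ts v = val us v) \<Longrightarrow> val (PhiT ts) r = val (PhiT us) r"
  unfolding PhiT_def by (rule lin_val_cong)
lemma PhiT_sorted: "allm sorted (PhiT ts)"
  unfolding PhiT_def by (rule allm_lin) (rule Phi_sorted)

lemma PhiT_RL: "val (PhiT (RL a x y b)) r = 0"
proof -
  let ?P = "Phi b"
  have s: "allm sorted ?P" by (rule Phi_sorted)
  have m: "PhiT (map (\<lambda>(c,z). (c, a @ z # b)) ts) = RA a (lin (\<lambda>z. R z ?P) ts)" for ts
    by (induction ts) (auto simp: Phi_append)
  have "val (PhiT (RL a x y b)) r = val (RA a (R x (R y ?P) @ sc (-1) (R y (R x ?P)) @ sc (-1) (lin (\<lambda>z. R z ?P) (brt x y)))) r"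
    by (simp add: RL_def m Phi_append)
  also have "\<dots> = val (RA a []) r"
    by (rule RA_cong) (simp add: C_comb[OF s, of x y])
  finally show ?thesis by simp
qed

lemma pb_rho: "p \<in> p_basis \<Longrightarrow> rho p [] = [(ph p, [])]"
  by (auto simp: p_basis_def)

lemma PhiT_ind: "p \<in> p_basis \<Longrightarrow> val (PhiT [(1, a@[p]), (- ph p, a)]) r = 0"
proof -
  assume p: "p \<in> p_basis"
  have e: "RA a [(ph p, [])] = sc (ph p) (RA a [(1,[])])" using RA_sc[of a "ph p" "[(1,[])]"] by simp
  have "Phi (a@[p]) = sc (ph p) (Phi a)"
    by (simp add: Phi_append R_Cons pb_rho[OF p] e Phi_def[of a])
  then show ?thesis by simp
qed

lemma Wker_PhiT: "f \<in> Wker ph \<Longrightarrow> \<exists>ts. f = val ts \<and> (\<forall>r. val (PhiT ts) r = 0)"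
proof (induction rule: Wker.induct)
  case (rel a x y b)
  show ?case by (rule exI[of _ "RL a x y b"]) (simp add: relv_val PhiT_RL)
next
  case (ind p a)
  have "(\<lambda>v. mono (a @ [p]) v - ph p * mono a v) = val [(1, a@[p]), (- ph p, a)]"
    by (auto simp: mono_def fun_eq_iff)
  then show ?case using PhiT_ind[OF ind] by blast
next
  case zero
  show ?case by (rule exI[of _ "[]"]) (simp add: fun_eq_iff)
next
  case (add f g)
  then obtain ts us where "f = val ts" "\<forall>r. val (PhiT ts) r = 0" "g = val us" "\<forall>r. val (PhiT us) r = 0"
    by blast
  then show ?case by (intro exI[of _ "ts @ us"]) (simp add: fun_eq_iff)
next
  case (smult f c)
  then obtain ts where "f = val ts" "\<forall>r. val (PhiT ts) r = 0" by blast
  then show ?case by (intro exI[of _ "sc c ts"]) (simp add: fun_eq_iff)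
qed

lemma Wker_Tfin: "f \<in> Wker ph \<Longrightarrow> f \<in> Tfin"
  using Wker_PhiT val_Tfin by blast

lemma Wker_kill: "val ts \<in> Wker ph \<Longrightarrow> val (PhiT ts) r = 0"
proof -
  assume "val ts \<in> Wker ph"
  then obtain us where "val ts = val us" "\<forall>r. val (PhiT us) r = 0" using Wker_PhiT by blast
  then show ?thesis using PhiT_cong[of ts us r] by (simp add: fun_eq_iff)
qed

end

fun unL :: "hv \<Rightarrow> int" where "unL (L i) = i" | "unL _ = 0"

definition embT :: "int list tm \<Rightarrow> hv list tm" where
  "embT Q = map (\<lambda>(c,n). (c, map L n)) Q"

lemma embT_Nil[simp]: "embT [] = []" by (simp add: embT_def)
lemma embT_Cons[simp]: "embT ((c,n)#Q) = (c, map L n) # embT Q" by (simp add: embT_def)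
lemma embT_app[simp]: "embT (P @ Q) = embT P @ embT Q" by (simp add: embT_def)
lemma embT_sc[simp]: "embT (sc c Q) = sc c (embT Q)" by (induction Q) auto
lemma embT_lin: "embT (lin G ps) = lin (\<lambda>n. embT (G n)) ps" by (induction ps) auto

lemma mapL_iff: "(map L n = v) = (set v \<subseteq> range L \<and> n = map unL v)"
proof
  assume "map L n = v" then show "set v \<subseteq> range L \<and> n = map unL v" by (auto simp: comp_def)
next
  assume h: "set v \<subseteq> range L \<and> n = map unL v"
  then have "\<forall>x\<in>set v. L (unL x) = x" by auto
  then show "map L n = v" using h by (induction v arbitrary: n) auto
qed

lemma val_embT: "val (embT Q) v = (if set v \<subseteq> range L then val Q (map unL v) else 0)"
proof (induction Q)
  case (Cons p Q)
  obtain c n where p: "p = (c,n)" by force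
  show ?case using Cons by (auto simp: p mapL_iff)
qed simp

lemma embT_cong: "(\<And>r. val P r = val Q r) \<Longrightarrow> val (embT P) v = val (embT Q) v"
  by (simp add: val_embT)

context FH begin

lemma Wker_lmul: "f \<in> Wker ph \<Longrightarrow> lmul x f \<in> Wker ph"
proof (induction rule: Wker.induct)
  case (rel a y z b)
  have "lx x (RL a y z b) = RL (x#a) y z b" by (simp add: lx_def RL_def sc_def split_def)
  then have "lmul x (relv a y z b) = relv (x#a) y z b" by (simp add: relv_val lmul_val)
  then show ?case using Wker.rel by metis
next
  case (ind p a)
  have "lmul x (\<lambda>v. mono (a @ [p]) v - ph p * mono a v) = (\<lambda>v. mono ((x#a) @ [p]) v - ph p * mono (x#a) v)"
    by (auto simp: lmul_def mono_def fun_eq_iff split: list.split)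
  then show ?case using Wker.ind[OF ind] by metis
next
  case zero
  have "lmul x (\<lambda>v. 0) = (\<lambda>v. 0)" by (auto simp: lmul_def fun_eq_iff split: list.split)
  then show ?case using Wker.zero by metis
next
  case (add f g)
  have "lmul x (\<lambda>v. f v + g v) = (\<lambda>v. lmul x f v + lmul x g v)"
    by (auto simp: lmul_def fun_eq_iff split: list.split)
  then show ?case using Wker.add[OF add.IH] by metis
next
  case (smult f c)
  have "lmul x (\<lambda>v. c * f v) = (\<lambda>v. c * lmul x f v)"
    by (auto simp: lmul_def fun_eq_iff split: list.split)
  then show ?case using Wker.smult[OF smult.IH] by metis
qed

definition eqT :: "hv list tm \<Rightarrow> hv list tm \<Rightarrow> bool" where
  "eqT ts us = ((\<lambda>v. val ts v - val us v) \<in> Wker ph)"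

lemma eqT_refl: "eqT ts ts"
  unfolding eqT_def using Wker.zero by simp

lemma eqT_cong: "eqT ts us \<Longrightarrow> (\<And>v. val ts v = val ts' v) \<Longrightarrow> (\<And>v. val us v = val us' v) \<Longrightarrow> eqT ts' us'"
  unfolding eqT_def by simp

lemma eqT_sym: "eqT ts us \<Longrightarrow> eqT us ts"
proof -
  assume "eqT ts us"
  then have "(\<lambda>v. (-1) * (val ts v - val us v)) \<in> Wker ph" unfolding eqT_def by (rule Wker.smult)
  then show ?thesis unfolding eqT_def by (simp add: algebra_simps)
qed

lemma eqT_trans: "eqT ts us \<Longrightarrow> eqT us ws \<Longrightarrow> eqT ts ws"
  unfolding eqT_def using Wker.add by fastforce

lemma eqT_app: "eqT t1 u1 \<Longrightarrow> eqT t2 u2 \<Longrightarrow> eqT (t1 @ t2) (u1 @ u2)"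
proof -
  assume "eqT t1 u1" "eqT t2 u2"
  then have "(\<lambda>v. (val t1 v - val u1 v) + (val t2 v - val u2 v)) \<in> Wker ph"
    unfolding eqT_def by (rule Wker.add)
  then show ?thesis unfolding eqT_def by (simp add: algebra_simps)
qed

lemma eqT_sc: "eqT ts us \<Longrightarrow> eqT (sc c ts) (sc c us)"
proof -
  assume "eqT ts us"
  then have "(\<lambda>v. c * (val ts v - val us v)) \<in> Wker ph" unfolding eqT_def by (rule Wker.smult)
  then show ?thesis unfolding eqT_def by (simp add: algebra_simps)
qed

lemma eqT_lx: "eqT ts us \<Longrightarrow> eqT (lx x ts) (lx x us)"
proof -
  assume "eqT ts us"
  moreover have "val (ts @ sc (-1) us) = (\<lambda>v. val ts v - val us v)" by (simp add: fun_eq_iff)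
  ultimately have "lmul x (val (ts @ sc (-1) us)) \<in> Wker ph"
    unfolding eqT_def by (intro Wker_lmul) simp
  then have "val (lx x (ts @ sc (-1) us)) \<in> Wker ph" by (simp add: lmul_val)
  moreover have "lx x (ts @ sc (-1) us) = lx x ts @ sc (-1) (lx x us)" by (simp add: lx_def sc_def split_def)
  moreover have "val (lx x ts @ sc (-1) (lx x us)) = (\<lambda>v. val (lx x ts) v - val (lx x us) v)"
    by (simp add: fun_eq_iff)
  ultimately show ?thesis unfolding eqT_def by simp
qed

lemma eqT_lin: "(\<And>c n. (c,n) \<in> set ps \<Longrightarrow> eqT [(1, F n)] (G n)) \<Longrightarrow> eqT (map (\<lambda>(c,n). (c, F n)) ps) (lin G ps)"
proof (induction ps)
  case Nil then show ?case by (simp add: eqT_refl)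
next
  case (Cons p ps)
  obtain c n where p: "p = (c,n)" by force
  have h1: "eqT [(1, F n)] (G n)" using Cons.prems[of c n] p by simp
  have "\<And>c' n'. (c',n') \<in> set ps \<Longrightarrow> eqT [(1, F n')] (G n')" using Cons.prems by auto
  then have h2: "eqT (map (\<lambda>(c,n). (c, F n)) ps) (lin G ps)" by (rule Cons.IH)
  have "eqT (sc c [(1, F n)] @ map (\<lambda>(c,n). (c, F n)) ps) (sc c (G n) @ lin G ps)"
    by (rule eqT_app[OF eqT_sc[OF h1] h2])
  then show ?case by (rule eqT_cong) (simp_all add: p)
qed

lemma nL_pb: "\<not> isL x \<Longrightarrow> x \<in> p_basis"
  by (cases x) (auto simp: isL_def p_basis_def)

lemma W1: "sorted n \<Longrightarrow> eqT [(1, x # map L n)] (embT (rho x n))"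
proof (induction "length n" arbitrary: n x rule: less_induct)
  case less
  note sn = less.prems
  have IH: "\<And>n' x. length n' < length n \<Longrightarrow> sorted n' \<Longrightarrow> eqT [(1, x # map L n')] (embT (rho x n'))"
    by (rule less.hyps)
  show ?case
  proof (cases n)
    case Nil
    show ?thesis
    proof (cases "isL x")
      case True
      then obtain i where x: "x = L i" by (auto simp: isL_def)
      show ?thesis by (simp add: x Nil eqT_refl)
    next
      case False
      have "(\<lambda>v. mono ([] @ [x]) v - ph x * mono [] v) \<in> Wker ph" by (rule Wker.ind[OF nL_pb[OF False]])
      moreover have "(\<lambda>v. val [(1, x # map L n)] v - val (embT (rho x n)) v) = (\<lambda>v. mono ([] @ [x]) v - ph x * mono [] v)"
        by (auto simp: fun_eq_iff mono_def Nil rho_nL_Nil[OF False])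
      ultimately show ?thesis unfolding eqT_def by simp
    qed
  next
    case (Cons j m)
    have sjm: "sorted (j#m)" using sn Cons by simp
    have sm: "sorted m" and jm: "\<forall>e\<in>set m. j \<le> e" using sjm by auto
    have lt: "length m < length n" using Cons by simp
    show ?thesis
    proof (cases "\<exists>i. x = L i \<and> i \<le> j")
      case True
      then obtain i where x: "x = L i" and ij: "i \<le> j" by blast
      show ?thesis by (simp add: x Cons ij rho_L_Cons eqT_refl)
    next
      case nsx: False
      let ?ml = "map L m"
      have S1: "eqT [(1, x # L j # ?ml)] ([(1, L j # x # ?ml)] @ map (\<lambda>(c,z). (c, z # ?ml)) (brt x (L j)))"
      proof -
        have "relv [] x (L j) ?ml \<in> Wker ph" by (rule Wker.rel)
        then have "val (RL [] x (L j) ?ml) \<in> Wker ph" by (simp add: relv_val)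
        moreover have "val (RL [] x (L j) ?ml) = (\<lambda>v. val [(1, x # L j # ?ml)] v
             - val ([(1, L j # x # ?ml)] @ map (\<lambda>(c,z). (c, z # ?ml)) (brt x (L j))) v)"
          by (simp add: RL_def fun_eq_iff)
        ultimately show ?thesis unfolding eqT_def by simp
      qed
      have S2: "eqT [(1, L j # x # ?ml)] (lx (L j) (embT (rho x m)))"
        using eqT_lx[OF IH[OF lt sm, of x], of "L j"] by (simp add: lx_def)
      have S3: "eqT (lx (L j) (embT (rho x m))) (embT (R (L j) (rho x m)))"
      proof -
        have e1: "lx (L j) (embT (rho x m)) = map (\<lambda>(c,n). (c, L j # map L n)) (rho x m)"
          by (simp add: lx_def embT_def split_def)
        have e2: "embT (R (L j) (rho x m)) = lin (\<lambda>n. embT (rho (L j) n)) (rho x m)"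
          by (simp add: R_def embT_lin)
        have "eqT (map (\<lambda>(c,n). (c, L j # map L n)) (rho x m)) (lin (\<lambda>n. embT (rho (L j) n)) (rho x m))"
        proof (rule eqT_lin)
          fix c n' assume cn: "(c,n') \<in> set (rho x m)"
          have sn': "sorted n'" using rho_sorted[OF sm] cn by (rule allm_mem)
          have "(\<forall>e\<in>set n'. j \<le> e) \<or> length n' \<le> length m"
            using mono_prop[OF sjm nsx] cn by (rule allm_mem)
          then show "eqT [(1, L j # map L n')] (embT (rho (L j) n'))"
          proof
            assume "\<forall>e\<in>set n'. j \<le> e"
            then show ?thesis by (simp add: lo_L eqT_refl)
          next
            assume "length n' \<le> length m"
            then have "length n' < length n" using lt by simp
            then show ?thesis using IH sn' by simp
          qed
        qed
        then show ?thesis using e1 e2 by simp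
      qed
      have S4: "eqT (map (\<lambda>(c,z). (c, z # ?ml)) (brt x (L j))) (embT (Rb x (L j) m))"
      proof -
        have e2: "embT (Rb x (L j) m) = lin (\<lambda>a. embT (rho a m)) (brt x (L j))"
          by (simp add: Rb_def embT_lin)
        have "eqT (map (\<lambda>(c,z). (c, z # ?ml)) (brt x (L j))) (lin (\<lambda>a. embT (rho a m)) (brt x (L j)))"
          by (rule eqT_lin) (rule IH[OF lt sm])
        then show ?thesis using e2 by simp
      qed
      have S5: "eqT [(1, x # L j # ?ml)] (embT (R (L j) (rho x m) @ Rb x (L j) m))"
        using eqT_trans[OF S1 eqT_app[OF eqT_trans[OF S2 S3] S4]] by simp
      have "\<And>v. val (embT (R (L j) (rho x m) @ Rb x (L j) m)) v = val (embT (rho x (j#m))) v"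
        by (rule embT_cong) (simp add: caseA[OF sm jm])
      then show ?thesis using S5 Cons by (auto intro: eqT_cong)
    qed
  qed
qed

lemma W2: "allm sorted ps \<Longrightarrow> eqT (lx x (embT ps)) (embT (R x ps))"
proof -
  assume s: "allm sorted ps"
  have e1: "lx x (embT ps) = map (\<lambda>(c,n). (c, x # map L n)) ps" by (simp add: lx_def embT_def split_def)
  have e2: "embT (R x ps) = lin (\<lambda>n. embT (rho x n)) ps" by (simp add: R_def embT_lin)
  have "eqT (map (\<lambda>(c,n). (c, x # map L n)) ps) (lin (\<lambda>n. embT (rho x n)) ps)"
  proof (rule eqT_lin)
    fix c n assume "(c,n) \<in> set ps"
    then have "sorted n" using s by (rule allm_mem[rotated])
    then show "eqT [(1, x # map L n)] (embT (rho x n))" by (rule W1)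
  qed
  then show ?thesis using e1 e2 by simp
qed

lemma W3: "eqT [(1,w)] (embT (Phi w))"
proof (induction w)
  case Nil then show ?case by (simp add: eqT_refl)
next
  case (Cons x w)
  have "eqT [(1, x#w)] (lx x (embT (Phi w)))" using eqT_lx[OF Cons.IH, of x] by (simp add: lx_def)
  then show ?case using W2[OF Phi_sorted, of x w] by (auto intro: eqT_trans)
qed

lemma W4: "eqT ts (embT (PhiT ts))"
proof -
  have "eqT (map (\<lambda>(c,w). (c, w)) ts) (lin (\<lambda>w. embT (Phi w)) ts)"
    by (rule eqT_lin) (rule W3)
  moreover have "embT (PhiT ts) = lin (\<lambda>w. embT (Phi w)) ts" by (simp add: PhiT_def embT_lin)
  ultimately show ?thesis by (simp add: case_prod_beta)
qed

lemma Wker_iff: "val ts \<in> Wker ph \<longleftrightarrow> (\<forall>r. val (PhiT ts) r = 0)"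
proof
  assume "val ts \<in> Wker ph" then show "\<forall>r. val (PhiT ts) r = 0" using Wker_kill by blast
next
  assume h: "\<forall>r. val (PhiT ts) r = 0"
  have "eqT ts []" by (rule eqT_cong[OF W4[of ts]]) (simp_all add: val_embT h)
  then show "val ts \<in> Wker ph" unfolding eqT_def by simp
qed

end

definition rmv :: "nat \<Rightarrow> int list \<Rightarrow> int list" where
  "rmv i xs = take i xs @ drop (Suc i) xs"

lemma rmv_0[simp]: "rmv 0 (j#m) = m" by (simp add: rmv_def)
lemma rmv_Suc[simp]: "rmv (Suc i) (j#m) = j # rmv i m" by (simp add: rmv_def)
lemma length_rmv: "i < length xs \<Longrightarrow> length (rmv i xs) = length xs - 1"
  by (simp add: rmv_def)
lemma set_rmv: "set (rmv i xs) \<subseteq> set xs"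
  unfolding rmv_def using set_take_subset[of i xs] set_drop_subset[of "Suc i" xs] by auto
lemma mset_rmv: "i < length xs \<Longrightarrow> mset xs = add_mset (xs ! i) (mset (rmv i xs))"
proof -
  assume "i < length xs"
  then have "xs = take i xs @ xs ! i # drop (Suc i) xs" by (rule id_take_nth_drop)
  then have "mset xs = mset (take i xs @ xs ! i # drop (Suc i) xs)" by (rule arg_cong)
  also have "\<dots> = add_mset (xs ! i) (mset (rmv i xs))" by (simp add: rmv_def)
  finally show ?thesis .
qed
lemma sorted_rmv: "sorted xs \<Longrightarrow> sorted (rmv i xs)"
proof -
  assume s: "sorted xs"
  have "sorted (take i xs @ drop i xs)" using s by simp
  then have a: "\<forall>x\<in>set (take i xs). \<forall>y\<in>set (drop i xs). x \<le> y"
    using sorted_append[of "take i xs" "drop i xs"] by blast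
  have "drop (Suc i) xs = drop 1 (drop i xs)" by simp
  then have sub: "set (drop (Suc i) xs) \<subseteq> set (drop i xs)"
    using set_drop_subset[of 1 "drop i xs"] by simp
  have s1: "sorted (take i xs)" using s by (rule sorted_wrt_take)
  have s2: "sorted (drop (Suc i) xs)" using s by (rule sorted_wrt_drop)
  have "\<forall>x\<in>set (take i xs). \<forall>y\<in>set (drop (Suc i) xs). x \<le> y" using a sub by blast
  then show ?thesis unfolding rmv_def using s1 s2 sorted_append by blast
qed

lemma sorted_mset_eq: "sorted xs \<Longrightarrow> sorted ys \<Longrightarrow> mset xs = mset ys \<Longrightarrow> xs = ys"
proof -
  assume a: "sorted xs" "sorted ys" "mset xs = mset ys"
  have "sort ys = xs" by (rule properties_for_sort) (use a in simp_all)
  then show ?thesis using sorted_sort_id[OF a(2)] by simp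
qed

context FH begin

definition Dterm :: "int \<Rightarrow> int list \<Rightarrow> int list tm" where
  "Dterm n0 m = map (\<lambda>i. (- of_int n0 * ph (I (n0 + m!i)), rmv i m)) [0..<length m]"

lemma Dterm_Nil[simp]: "Dterm n0 [] = []" by (simp add: Dterm_def)

lemma Dterm_Cons: "Dterm n0 (j#m) = (- of_int n0 * ph (I (n0 + j)), m) #
   map (\<lambda>i. (- of_int n0 * ph (I (n0 + m!i)), j # rmv i m)) [0..<length m]"
proof -
  have "[0..<Suc (length m)] = 0 # map Suc [0..<length m]"
    by (simp add: upt_conv_Cons map_Suc_upt del: upt_Suc)
  then have "[0..<length (j#m)] = 0 # map Suc [0..<length m]" by simp
  then show ?thesis by (simp add: Dterm_def comp_def)
qed

lemma Dterm_len: "allm (\<lambda>r. Suc (length r) = length m) (Dterm n0 m)"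
  by (auto simp: Dterm_def allm_def length_rmv)

lemma R_map_lo: "(\<And>i. i \<in> set is \<Longrightarrow> \<forall>e\<in>set (g i). j \<le> e) \<Longrightarrow>
   R (L j) (map (\<lambda>i. (c i, g i)) is) = map (\<lambda>i. (c i, j # g i)) is"
proof (induction "is")
  case (Cons a "is")
  have "\<forall>e\<in>set (g a). j \<le> e" using Cons.prems[of a] by simp
  then have h1: "rho (L j) (g a) = [(1, j # g a)]" by (rule lo_L)
  have "\<And>i. i \<in> set is \<Longrightarrow> \<forall>e\<in>set (g i). j \<le> e" using Cons.prems by auto
  then have h2: "R (L j) (map (\<lambda>i. (c i, g i)) is) = map (\<lambda>i. (c i, j # g i)) is" by (rule Cons.IH)
  show ?case by (simp add: R_Cons h1 h2)
qed simp

lemma R_L_len: "allm (\<lambda>r. length r + k \<le> N) E \<Longrightarrow> allm (\<lambda>r. length r + k \<le> Suc N) (R (L j) E)"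
  unfolding R_def
proof (rule allm_lin)
  fix c n assume a: "allm (\<lambda>r. length r + k \<le> N) E" and cn: "(c,n) \<in> set E"
  then have h: "length n + k \<le> N" by (rule allm_mem)
  show "allm (\<lambda>r. length r + k \<le> Suc N) (rho (L j) n)"
    by (rule allm_mono[OF rho_L_len]) (use h in simp)
qed

lemma symI: "sorted m \<Longrightarrow> \<exists>E. allm (\<lambda>r. length r + 2 \<le> length m) E \<and>
    (\<forall>r. val (rho (I n0) m) r = val ((ph (I n0), m) # Dterm n0 m @ E) r)"
proof (induction m arbitrary: n0)
  case Nil
  show ?case by (rule exI[of _ "[]"]) simp
next
  case (Cons j m)
  have sm: "sorted m" and jm: "\<forall>e\<in>set m. j \<le> e" using Cons.prems by auto
  obtain E1 where E1: "allm (\<lambda>r. length r + 2 \<le> length m) E1"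
    "\<forall>r. val (rho (I n0) m) r = val ((ph (I n0), m) # Dterm n0 m @ E1) r"
    using Cons.IH[OF sm, of n0] by blast
  obtain E2 where E2: "allm (\<lambda>r. length r + 2 \<le> length m) E2"
    "\<forall>r. val (rho (I (j+n0)) m) r = val ((ph (I (j+n0)), m) # Dterm (j+n0) m @ E2) r"
    using Cons.IH[OF sm, of "j+n0"] by blast
  let ?D1 = "map (\<lambda>i. (- of_int n0 * ph (I (n0 + m!i)), j # rmv i m)) [0..<length m]"
  have RD: "R (L j) (Dterm n0 m) = ?D1"
    unfolding Dterm_def
    by (rule R_map_lo) (use jm set_rmv in blast)
  let ?E = "R (L j) E1 @ sc (- of_int n0) (Dterm (j+n0) m @ E2)"
  have Elen: "allm (\<lambda>r. length r + 2 \<le> length (j#m)) ?E"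
  proof -
    have a1: "allm (\<lambda>r. length r + 2 \<le> Suc (length m)) (R (L j) E1)" by (rule R_L_len[OF E1(1)])
    have a2: "allm (\<lambda>r. length r + 2 \<le> Suc (length m)) (Dterm (j+n0) m)"
      by (rule allm_mono[OF Dterm_len]) simp
    have a3: "allm (\<lambda>r. length r + 2 \<le> Suc (length m)) E2"
      by (rule allm_mono[OF E2(1)]) simp
    show ?thesis using a1 a2 a3 by simp
  qed
  have V: "val (rho (I n0) (j#m)) r = val ((ph (I n0), j#m) # Dterm n0 (j#m) @ ?E) r" for r
  proof -
    have v1: "val (rho (I n0) (j#m)) r = val (R (L j) (rho (I n0) m)) r + val (sc (- of_int n0) (rho (I (j+n0)) m)) r"
      by (simp add: rho_I_Cons phZ2)
    have v2: "val (R (L j) (rho (I n0) m)) r = val (R (L j) ((ph (I n0), m) # Dterm n0 m @ E1)) r"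
      by (rule R_cong) (use E1(2) in simp)
    have v3: "val (R (L j) ((ph (I n0), m) # Dterm n0 m @ E1)) r = ph (I n0) * val [(1, j#m)] r + val ?D1 r + val (R (L j) E1) r"
      by (simp add: R_Cons RD lo_L[OF jm])
    have v4: "val (sc (- of_int n0) (rho (I (j+n0)) m)) r
        = - of_int n0 * (ph (I (j+n0)) * val [(1,m)] r + val (Dterm (j+n0) m) r + val E2 r)"
      using E2(2) by simp
    have "val (rho (I n0) (j#m)) r = (ph (I n0) * val [(1, j#m)] r + val ?D1 r + val (R (L j) E1) r)
       + (- of_int n0 * (ph (I (j+n0)) * val [(1,m)] r + val (Dterm (j+n0) m) r + val E2 r))"
      using v1 v2 v3 v4 by simp
    also have "\<dots> = val ((ph (I n0), j#m) # Dterm n0 (j#m) @ ?E) r"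
      by (simp add: Dterm_Cons algebra_simps)
    finally show ?thesis .
  qed
  show ?case using Elen V by blast
qed

end

lemma val_zero: "(\<And>c n. (c,n) \<in> set ts \<Longrightarrow> n = r \<Longrightarrow> c = 0) \<Longrightarrow> val ts r = 0"
proof (induction ts)
  case (Cons p ts)
  obtain c n where p: "p = (c,n)" by force
  have "val ts r = 0" using Cons by auto
  moreover have "n = r \<Longrightarrow> c = 0" using Cons.prems[of c n] p by simp
  ultimately show ?case using p by auto
qed simp

lemma val_self: "val (lin (\<lambda>n. [(1,n)]) P) r = val P r"
  by (induction P) auto

lemma sum_single_nz:
  assumes "finite K" "a \<in> K" "\<And>n. n \<in> K \<Longrightarrow> n \<noteq> a \<Longrightarrow> g n = 0" "g a \<noteq> (0::complex)"
  shows "(\<Sum>n\<in>K. g n) \<noteq> 0"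
proof -
  have "(\<Sum>n\<in>K. g n) = g a + (\<Sum>n\<in>K - {a}. g n)" using assms(1,2) by (rule sum.remove)
  also have "(\<Sum>n\<in>K - {a}. g n) = 0" using assms(3) by (intro sum.neutral) auto
  finally show ?thesis using assms(4) by simp
qed

context FH begin

lemma val_Dterm: "val (Dterm n0 m) r = (\<Sum>i<length m. if rmv i m = r then - (of_int n0 * ph (I (n0 + m!i))) else 0)"
proof -
  have "val (Dterm n0 m) r = (\<Sum>i\<leftarrow>[0..<length m]. if rmv i m = r then - (of_int n0 * ph (I (n0 + m!i))) else 0)"
    by (simp add: Dterm_def val_def comp_def)
  also have "\<dots> = (\<Sum>i<length m. if rmv i m = r then - (of_int n0 * ph (I (n0 + m!i))) else 0)"
    by (simp add: sum_list_distinct_conv_sum_set atLeast0LessThan)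
  finally show ?thesis .
qed

lemma pick:
  assumes fin: "finite (S_phi ph)" and c2: "card (S_phi ph) \<ge> 2"
    and Ef: "finite Es" "Es \<noteq> {}"
  shows "\<exists>e n0. e \<in> Es \<and> n0 \<noteq> 0 \<and> ph (I (n0+e)) \<noteq> 0 \<and> (\<forall>v\<in>Es. ph (I (n0+v)) \<noteq> 0 \<longrightarrow> v = e)"
proof -
  let ?S = "S_phi ph"
  have Sne: "?S \<noteq> {}" using c2 by auto
  obtain a b where ab: "a \<in> ?S" "b \<in> ?S" "a \<noteq> b"
  proof -
    have "\<not> card ?S \<le> 1" using c2 by simp
    then show ?thesis using that by (metis card_le_Suc0_iff_eq[OF fin] One_nat_def)
  qed
  let ?s1 = "Min ?S" and ?s2 = "Max ?S"
  have s1S: "?s1 \<in> ?S" and s2S: "?s2 \<in> ?S" using fin Sne by auto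
  have s12: "?s1 < ?s2"
  proof -
    have "?s1 \<le> min a b" "max a b \<le> ?s2" using fin ab by auto
    then show ?thesis using ab(3) by linarith
  qed
  have inS: "\<And>t. ph (I t) \<noteq> 0 \<Longrightarrow> ?s1 \<le> t \<and> t \<le> ?s2"
    using fin by (auto simp: S_phi_def)
  have ph1: "ph (I ?s1) \<noteq> 0" and ph2: "ph (I ?s2) \<noteq> 0" using s1S s2S by (auto simp: S_phi_def)
  let ?jmax = "Max Es" and ?jmin = "Min Es"
  have jmaxE: "?jmax \<in> Es" and jminE: "?jmin \<in> Es" using Ef by auto
  have jb: "\<And>v. v \<in> Es \<Longrightarrow> ?jmin \<le> v \<and> v \<le> ?jmax" using Ef by auto
  show ?thesis
  proof (cases "?s1 = ?jmax")
    case False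
    have "?s1 - ?jmax \<noteq> 0" using False by simp
    moreover have "ph (I (?s1 - ?jmax + ?jmax)) \<noteq> 0" using ph1 by simp
    moreover have "\<forall>v\<in>Es. ph (I (?s1 - ?jmax + v)) \<noteq> 0 \<longrightarrow> v = ?jmax"
    proof (intro ballI impI)
      fix v assume v: "v \<in> Es" and nz: "ph (I (?s1 - ?jmax + v)) \<noteq> 0"
      have "?s1 \<le> ?s1 - ?jmax + v" using inS[OF nz] by simp
      then show "v = ?jmax" using jb[OF v] by simp
    qed
    ultimately show ?thesis using jmaxE by blast
  next
    case True
    have "?s2 - ?jmin \<noteq> 0" using True s12 jb[OF jmaxE] by simp
    moreover have "ph (I (?s2 - ?jmin + ?jmin)) \<noteq> 0" using ph2 by simp
    moreover have "\<forall>v\<in>Es. ph (I (?s2 - ?jmin + v)) \<noteq> 0 \<longrightarrow> v = ?jmin"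
    proof (intro ballI impI)
      fix v assume v: "v \<in> Es" and nz: "ph (I (?s2 - ?jmin + v)) \<noteq> 0"
      have "?s2 - ?jmin + v \<le> ?s2" using inS[OF nz] by simp
      then show "v = ?jmin" using jb[OF v] by simp
    qed
    ultimately show ?thesis using jminE by blast
  qed
qed


lemma step:
  assumes fin: "finite (S_phi ph)" and c2: "card (S_phi ph) \<ge> 2"
    and sP: "allm sorted P"
    and bnd: "\<forall>n. val P n \<noteq> 0 \<longrightarrow> length n \<le> Suc d"
    and top: "\<exists>n. val P n \<noteq> 0 \<and> length n = Suc d"
  shows "\<exists>n0. (\<forall>r. val (R (I n0) P @ sc (- ph (I n0)) P) r \<noteq> 0 \<longrightarrow> length r \<le> d)
            \<and> (\<exists>r. val (R (I n0) P @ sc (- ph (I n0)) P) r \<noteq> 0)"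
proof -
  let ?K = "keys P"
  let ?T = "{n \<in> ?K. val P n \<noteq> 0 \<and> length n = Suc d}"
  let ?Es = "\<Union>n\<in>?T. set n"
  have Tfin: "finite ?T" by (rule finite_subset[OF _ finite_keys[of P]]) blast
  have Tne: "?T \<noteq> {}"
  proof -
    obtain n where n: "val P n \<noteq> 0" "length n = Suc d" using top by blast
    then have "n \<in> ?T" using val_nz_keys[of P n] by simp
    then show ?thesis by blast
  qed
  have Esfin: "finite ?Es" using Tfin by (intro finite_UN_I) simp_all
  have Esne: "?Es \<noteq> {}"
  proof -
    obtain n where n: "n \<in> ?T" using Tne by blast
    then have "n \<noteq> []" by auto
    then show ?thesis using n by auto
  qed
  obtain e n0 where e: "e \<in> ?Es" "n0 \<noteq> 0" "ph (I (n0+e)) \<noteq> 0" "\<forall>v\<in>?Es. ph (I (n0+v)) \<noteq> 0 \<longrightarrow> v = e"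
    using pick[OF fin c2 Esfin Esne] by blast
  have "\<forall>n. \<exists>E. sorted n \<longrightarrow> (allm (\<lambda>r. length r + 2 \<le> length n) E \<and>
    (\<forall>r. val (rho (I n0) n) r = val ((ph (I n0), n) # Dterm n0 n @ E) r))"
  proof
    fix n
    show "\<exists>E. sorted n \<longrightarrow> (allm (\<lambda>r. length r + 2 \<le> length n) E \<and>
      (\<forall>r. val (rho (I n0) n) r = val ((ph (I n0), n) # Dterm n0 n @ E) r))"
    proof (cases "sorted n")
      case True
      from symI[OF True, of n0] obtain E where "allm (\<lambda>r. length r + 2 \<le> length n) E"
        "\<forall>r. val (rho (I n0) n) r = val ((ph (I n0), n) # Dterm n0 n @ E) r" by blast
      then show ?thesis by blast
    qed simp
  qed
  from choice[OF this] obtain Ef where Ef: "\<And>n. sorted n \<Longrightarrow> allm (\<lambda>r. length r + 2 \<le> length n) (Ef n) \<and>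
    (\<forall>r. val (rho (I n0) n) r = val ((ph (I n0), n) # Dterm n0 n @ Ef n) r)" by blast
  let ?P' = "R (I n0) P @ sc (- ph (I n0)) P"
  have formula: "val ?P' r = (\<Sum>n\<in>?K. val P n * (val (Dterm n0 n) r + val (Ef n) r))" for r
  proof -
    have a: "val (R (I n0) P) r = (\<Sum>n\<in>?K. val P n * val (rho (I n0) n) r)"
      unfolding R_def by (rule val_lin_keys) auto
    have b: "val P r = (\<Sum>n\<in>?K. val P n * val [(1,n)] r)"
      using val_lin_keys[of ?K P "\<lambda>n. [(1,n)]" r] val_self[of P r] by simp
    have c: "val (rho (I n0) n) r = ph (I n0) * val [(1,n)] r + val (Dterm n0 n) r + val (Ef n) r"
      if n: "n \<in> ?K" for n
    proof -
      have "sorted n" using sP n by (rule allm_keys)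
      then have "\<forall>r. val (rho (I n0) n) r = val ((ph (I n0), n) # Dterm n0 n @ Ef n) r" using Ef by blast
      then show ?thesis by simp
    qed
    have "val ?P' r = (\<Sum>n\<in>?K. val P n * val (rho (I n0) n) r) - ph (I n0) * (\<Sum>n\<in>?K. val P n * val [(1,n)] r)"
      using a b by simp
    also have "\<dots> = (\<Sum>n\<in>?K. val P n * val (rho (I n0) n) r - ph (I n0) * (val P n * val [(1,n)] r))"
      by (simp add: sum_subtractf sum_distrib_left)
    also have "\<dots> = (\<Sum>n\<in>?K. val P n * (val (Dterm n0 n) r + val (Ef n) r))"
      by (rule sum.cong) (simp_all add: c algebra_simps)
    finally show ?thesis .
  qed
  have part1: "\<forall>r. val ?P' r \<noteq> 0 \<longrightarrow> length r \<le> d"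
  proof (intro allI impI)
    fix r assume nz: "val ?P' r \<noteq> 0"
    show "length r \<le> d"
    proof (rule ccontr)
      assume lr: "\<not> length r \<le> d"
      have "(\<Sum>n\<in>?K. val P n * (val (Dterm n0 n) r + val (Ef n) r)) = 0"
      proof (rule sum.neutral, rule ballI)
        fix n assume nK: "n \<in> ?K"
        show "val P n * (val (Dterm n0 n) r + val (Ef n) r) = 0"
        proof (cases "val P n = 0")
          case False
          then have ln: "length n \<le> Suc d" using bnd by blast
          have sn: "sorted n" using sP nK by (rule allm_keys)
          have d0: "val (Dterm n0 n) r = 0"
          proof (rule val_zero)
            fix c m assume cm: "(c,m) \<in> set (Dterm n0 n)" and mr: "m = r"
            have "Suc (length m) = length n" using Dterm_len cm by (rule allm_mem)
            then have "Suc (length r) = length n" using mr by simp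
            then show "c = 0" using ln lr by simp
          qed
          have e0: "val (Ef n) r = 0"
          proof (rule val_zero)
            fix c m assume cm: "(c,m) \<in> set (Ef n)" and mr: "m = r"
            have "allm (\<lambda>r. length r + 2 \<le> length n) (Ef n)" using Ef[OF sn] by blast
            then have "length m + 2 \<le> length n" using cm by (rule allm_mem)
            then have "length r + 2 \<le> length n" using mr by simp
            then show "c = 0" using ln lr by simp
          qed
          show ?thesis using d0 e0 by simp
        qed simp
      qed
      then show False using nz formula[of r] by simp
    qed
  qed
  obtain nstar where nT: "nstar \<in> ?T" and en: "e \<in> set nstar" using e(1) by blast
  obtain i0 where i0: "i0 < length nstar" "nstar ! i0 = e" using en by (auto simp: in_set_conv_nth)
  let ?r0 = "rmv i0 nstar"
  have snstar: "sorted nstar" using sP nT by (auto intro: allm_keys)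
  have lr0: "length ?r0 = d" using i0 nT by (simp add: length_rmv)
  have msr0: "mset nstar = add_mset e (mset ?r0)" using mset_rmv[OF i0(1)] i0(2) by simp
  have key: "n = nstar" if nT': "n \<in> ?T" and i: "i < length n" and rm: "rmv i n = ?r0"
      and nz: "ph (I (n0 + n!i)) \<noteq> 0" for n i
  proof -
    have "n ! i \<in> ?Es" using nT' i by auto
    then have ni: "n ! i = e" using e(4) nz by blast
    have "mset n = add_mset e (mset ?r0)" using mset_rmv[OF i] ni rm by simp
    then have "mset n = mset nstar" using msr0 by simp
    moreover have "sorted n" using sP nT' by (auto intro: allm_keys)
    ultimately show ?thesis using snstar sorted_mset_eq by blast
  qed
  have rmv_e: "rmv i nstar = ?r0" if i: "i < length nstar" and ni: "nstar ! i = e" for i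
  proof -
    have "add_mset e (mset (rmv i nstar)) = add_mset e (mset ?r0)"
      using mset_rmv[OF i] ni msr0 by simp
    then have "mset (rmv i nstar) = mset ?r0" by simp
    then show ?thesis using sorted_rmv[OF snstar] sorted_mset_eq by blast
  qed
  have part2: "val ?P' ?r0 \<noteq> 0"
  proof -
    let ?g = "\<lambda>n. val P n * (val (Dterm n0 n) ?r0 + val (Ef n) ?r0)"
    have Ez: "val (Ef n) ?r0 = 0" if "sorted n" "length n \<le> Suc d" for n
    proof (rule val_zero)
      fix c m assume cm: "(c,m) \<in> set (Ef n)" and mr: "m = ?r0"
      have "allm (\<lambda>r. length r + 2 \<le> length n) (Ef n)" using Ef[OF that(1)] by blast
      then have "length m + 2 \<le> length n" using cm by (rule allm_mem)
      then have "length ?r0 + 2 \<le> length n" using mr by simp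
      then show "c = 0" using that(2) lr0 by simp
    qed
    have others: "?g n = 0" if nK: "n \<in> ?K" and nn: "n \<noteq> nstar" for n
    proof (cases "val P n = 0")
      case False
      then have ln: "length n \<le> Suc d" using bnd by blast
      have sn: "sorted n" using sP nK by (rule allm_keys)
      have d0: "val (Dterm n0 n) ?r0 = 0"
      proof (cases "length n = Suc d")
        case True
        then have nT': "n \<in> ?T" using nK False by simp
        show ?thesis unfolding val_Dterm
        proof (rule sum.neutral, rule ballI)
          fix i assume "i \<in> {..<length n}"
          then have i: "i < length n" by simp
          show "(if rmv i n = ?r0 then - (of_int n0 * ph (I (n0 + n ! i))) else 0) = 0"
          proof (cases "rmv i n = ?r0")
            case True
            then have "ph (I (n0 + n ! i)) = 0" using key[OF nT' i] nn by blast
            then show ?thesis by simp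
          qed simp
        qed
      next
        case False
        then have ln': "length n \<le> d" using ln by simp
        show ?thesis
        proof (rule val_zero)
          fix c m assume cm: "(c,m) \<in> set (Dterm n0 n)" and mr: "m = ?r0"
          have "Suc (length m) = length n" using Dterm_len cm by (rule allm_mem)
          then have "Suc (length ?r0) = length n" using mr by simp
          then show "c = 0" using ln' lr0 by simp
        qed
      qed
      show ?thesis using d0 Ez[OF sn ln] by simp
    qed simp
    have gstar: "?g nstar \<noteq> 0"
    proof -
      let ?C = "- (of_int n0 * ph (I (n0 + e)))"
      have C0: "?C \<noteq> 0" using e(2,3) by simp
      have "val (Dterm n0 nstar) ?r0 = (\<Sum>i<length nstar. if nstar ! i = e then ?C else 0)"
        unfolding val_Dterm
      proof (rule sum.cong)
        fix i assume "i \<in> {..<length nstar}"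
        then have i: "i < length nstar" by simp
        show "(if rmv i nstar = ?r0 then - (of_int n0 * ph (I (n0 + nstar ! i))) else 0)
            = (if nstar ! i = e then ?C else 0)"
        proof (cases "nstar ! i = e")
          case True then show ?thesis using rmv_e[OF i] by simp
        next
          case False
          have "nstar ! i \<in> ?Es" using nT i by auto
          then have "ph (I (n0 + nstar ! i)) = 0" using e(4) False by blast
          then show ?thesis using False by simp
        qed
      qed simp
      also have "\<dots> = (\<Sum>i\<in>{i \<in> {..<length nstar}. nstar ! i = e}. ?C)"
        using sum.inter_filter[of "{..<length nstar}" "\<lambda>_. ?C" "\<lambda>i. nstar ! i = e"] by simp
      also have "\<dots> = of_nat (card {i \<in> {..<length nstar}. nstar ! i = e}) * ?C" by simp
      finally have D: "val (Dterm n0 nstar) ?r0 = of_nat (card {i \<in> {..<length nstar}. nstar ! i = e}) * ?C" .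
      have "i0 \<in> {i \<in> {..<length nstar}. nstar ! i = e}" using i0 by simp
      then have "card {i \<in> {..<length nstar}. nstar ! i = e} \<noteq> 0" by (auto simp: card_eq_0_iff)
      then have "val (Dterm n0 nstar) ?r0 \<noteq> 0" using D C0 by simp
      moreover have "val (Ef nstar) ?r0 = 0" using Ez[OF snstar] nT by simp
      moreover have "val P nstar \<noteq> 0" using nT by simp
      ultimately show ?thesis by simp
    qed
    have "(\<Sum>n\<in>?K. ?g n) \<noteq> 0"
      by (rule sum_single_nz[of ?K nstar]) (use nT others gstar in auto)
    then show ?thesis using formula[of ?r0] by simp
  qed
  show ?thesis using part1 part2 by blast
qed

end

lemma mono_lmul: "lmul x (mono w) = mono (x#w)"
  by (auto simp: lmul_def mono_def fun_eq_iff split: list.split)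

lemma smM_app: "\<forall>f\<in>M. \<forall>c. (\<lambda>v. c * f v) \<in> M \<Longrightarrow> f \<in> M \<Longrightarrow> (\<lambda>v. c * f v) \<in> M" by blast
lemma addM_app: "\<forall>f\<in>M. \<forall>g\<in>M. (\<lambda>v. f v + g v) \<in> M \<Longrightarrow> f \<in> M \<Longrightarrow> g \<in> M \<Longrightarrow> (\<lambda>v. f v + g v) \<in> M" by blast
lemma lmM_app: "\<forall>f\<in>M. \<forall>x. lmul x f \<in> M \<Longrightarrow> f \<in> M \<Longrightarrow> lmul x f \<in> M" by blast

context FH begin

lemma descent:
  assumes fin: "finite (S_phi ph)" and c2: "card (S_phi ph) \<ge> 2"
    and WM: "Wker ph \<subseteq> M" and addM: "\<forall>f\<in>M. \<forall>g\<in>M. (\<lambda>v. f v + g v) \<in> M"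
    and smM: "\<forall>f\<in>M. \<forall>c. (\<lambda>v. c * f v) \<in> M" and lmM: "\<forall>f\<in>M. \<forall>x. lmul x f \<in> M"
  shows "val ts \<in> M \<Longrightarrow> (\<exists>r. val (PhiT ts) r \<noteq> 0) \<Longrightarrow> (\<forall>r. val (PhiT ts) r \<noteq> 0 \<longrightarrow> length r \<le> d)
     \<Longrightarrow> mono [] \<in> M"
proof (induction d arbitrary: ts)
  case 0
  let ?P = "PhiT ts"
  have only: "r = []" if "val ?P r \<noteq> 0" for r using 0(3) that by auto
  obtain r1 where r1: "val ?P r1 \<noteq> 0" using 0(2) by blast
  have c0: "val ?P [] \<noteq> 0" using r1 only[OF r1] by simp
  let ?c = "val ?P []"
  have e1: "val (embT ?P) = val [(?c, [])]"
  proof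
    fix v
    show "val (embT ?P) v = val [(?c, [])] v"
    proof (cases "v = []")
      case True then show ?thesis by (simp add: val_embT)
    next
      case False
      have "val ?P (map unL v) = 0"
      proof (rule ccontr)
        assume "val ?P (map unL v) \<noteq> 0"
        then have "map unL v = []" by (rule only)
        then show False using False by simp
      qed
      then show ?thesis using False by (simp add: val_embT)
    qed
  qed
  have "eqT ts (embT ?P)" by (rule W4)
  then have g: "(\<lambda>v. val ts v - val [(?c,[])] v) \<in> M" using WM e1 unfolding eqT_def by auto
  have g2: "(\<lambda>v. (-1) * (val ts v - val [(?c,[])] v)) \<in> M" by (rule smM_app[OF smM g])
  have "(\<lambda>v. val ts v + (-1) * (val ts v - val [(?c,[])] v)) \<in> M" by (rule addM_app[OF addM 0(1) g2])
  moreover have "(\<lambda>v. val ts v + (-1) * (val ts v - val [(?c,[])] v)) = val [(?c,[])]" by (simp add: fun_eq_iff)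
  ultimately have h: "val [(?c,[])] \<in> M" by simp
  then have "(\<lambda>v. (1/?c) * val [(?c,[])] v) \<in> M" using smM_app[OF smM] by blast
  moreover have "(\<lambda>v. (1/?c) * val [(?c,[])] v) = mono []" using c0 by (auto simp: fun_eq_iff mono_def)
  ultimately show ?case by simp
next
  case (Suc d)
  let ?P = "PhiT ts"
  show ?case
  proof (cases "\<exists>n. val ?P n \<noteq> 0 \<and> length n = Suc d")
    case True
    obtain n0 where n0: "\<forall>r. val (R (I n0) ?P @ sc (- ph (I n0)) ?P) r \<noteq> 0 \<longrightarrow> length r \<le> d"
      "\<exists>r. val (R (I n0) ?P @ sc (- ph (I n0)) ?P) r \<noteq> 0"
      using step[OF fin c2 PhiT_sorted Suc.prems(3) True] by blast
    let ?ts' = "lx (I n0) ts @ sc (- ph (I n0)) ts"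
    have "lmul (I n0) (val ts) \<in> M" using lmM_app[OF lmM Suc.prems(1)] by blast
    then have a: "val (lx (I n0) ts) \<in> M" by (simp add: lmul_val)
    have b: "(\<lambda>v. (- ph (I n0)) * val ts v) \<in> M" using smM_app[OF smM Suc.prems(1)] by blast
    have "(\<lambda>v. val (lx (I n0) ts) v + (- ph (I n0)) * val ts v) \<in> M" by (rule addM_app[OF addM a b])
    moreover have "(\<lambda>v. val (lx (I n0) ts) v + (- ph (I n0)) * val ts v) = val ?ts'" by (simp add: fun_eq_iff)
    ultimately have m: "val ?ts' \<in> M" by simp
    have p: "PhiT ?ts' = R (I n0) ?P @ sc (- ph (I n0)) ?P" by (simp add: PhiT_lx)
    show ?thesis by (rule Suc.IH[OF m]) (use n0 p in simp_all)
  next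
    case False
    have "\<forall>r. val ?P r \<noteq> 0 \<longrightarrow> length r \<le> d"
    proof (intro allI impI)
      fix r assume nz: "val ?P r \<noteq> 0"
      then have "length r \<le> Suc d" using Suc.prems(3) by blast
      moreover have "length r \<noteq> Suc d" using False nz by blast
      ultimately show "length r \<le> d" by simp
    qed
    then show ?thesis using Suc.IH Suc.prems(1,2) by blast
  qed
qed

lemma mono_nil_notin: "mono [] \<notin> Wker ph"
proof
  assume "mono [] \<in> Wker ph"
  then have "val [(1,[])] \<in> Wker ph" by (simp add: mono_val)
  then have "\<forall>r. val (PhiT [(1,[])]) r = 0" using Wker_iff by blast
  then have "val (PhiT [(1,[])]) [] = 0" by blast
  moreover have "val (PhiT [(1,[])]) [] = 1" by simp
  ultimately show False by simp
qed

lemma all_in_M: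
  assumes WM: "Wker ph \<subseteq> M" and addM: "\<forall>f\<in>M. \<forall>g\<in>M. (\<lambda>v. f v + g v) \<in> M"
    and smM: "\<forall>f\<in>M. \<forall>c. (\<lambda>v. c * f v) \<in> M" and lmM: "\<forall>f\<in>M. \<forall>x. lmul x f \<in> M"
    and m0: "mono [] \<in> M"
  shows "Tfin \<subseteq> M"
proof
  have mw: "mono w \<in> M" for w
  proof (induction w)
    case Nil then show ?case by (rule m0)
  next
    case (Cons x w)
    have "lmul x (mono w) \<in> M" using lmM_app[OF lmM Cons.IH] by blast
    then show ?case by (simp add: mono_lmul)
  qed
  have vt: "val us \<in> M" for us
  proof (induction us)
    case Nil
    have "(\<lambda>v. 0) \<in> M" using WM Wker.zero by blast
    moreover have "val [] = (\<lambda>v. 0)" by (simp add: fun_eq_iff)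
    ultimately show ?case by simp
  next
    case (Cons p us)
    obtain c w where p: "p = (c,w)" by force
    have "(\<lambda>v. c * mono w v) \<in> M" using smM_app[OF smM mw] by blast
    then have "(\<lambda>v. c * mono w v + val us v) \<in> M" using addM_app[OF addM _ Cons.IH] by blast
    moreover have "(\<lambda>v. c * mono w v + val us v) = val (p#us)" by (auto simp: p fun_eq_iff mono_def)
    ultimately show ?case by simp
  qed
  fix f assume "f \<in> Tfin"
  then obtain us where "f = val us" using Tfin_val by blast
  then show "f \<in> M" using vt by simp
qed

lemma irred:
  assumes fin: "finite (S_phi ph)" and c2: "card (S_phi ph) \<ge> 2"
  shows "W_irreducible ph"
  unfolding W_irreducible_def
proof (intro conjI allI impI)
  show "Wker ph \<noteq> Tfin" using mono_nil_notin val_Tfin[of "[(1,[])]"] by (auto simp: mono_val)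
next
  fix M
  assume H: "Wker ph \<subseteq> M \<and> M \<subseteq> Tfin \<and> (\<forall>f\<in>M. \<forall>g\<in>M. (\<lambda>v. f v + g v) \<in> M)
          \<and> (\<forall>f\<in>M. \<forall>c. (\<lambda>v. c * f v) \<in> M) \<and> (\<forall>f\<in>M. \<forall>x. lmul x f \<in> M)"
  then have WM: "Wker ph \<subseteq> M" and MT: "M \<subseteq> Tfin" and addM: "\<forall>f\<in>M. \<forall>g\<in>M. (\<lambda>v. f v + g v) \<in> M"
    and smM: "\<forall>f\<in>M. \<forall>c. (\<lambda>v. c * f v) \<in> M" and lmM: "\<forall>f\<in>M. \<forall>x. lmul x f \<in> M" by blast+
  show "M = Wker ph \<or> M = Tfin"
  proof (cases "M = Wker ph")
    case False
    then obtain f where fM: "f \<in> M" and fW: "f \<notin> Wker ph" using WM by blast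
    obtain ts where ts: "f = val ts" using Tfin_val MT fM by blast
    have nz: "\<exists>r. val (PhiT ts) r \<noteq> 0" using fW ts Wker_iff by blast
    let ?d = "Max (length ` keys (PhiT ts))"
    have bd: "\<forall>r. val (PhiT ts) r \<noteq> 0 \<longrightarrow> length r \<le> ?d"
    proof (intro allI impI)
      fix r assume "val (PhiT ts) r \<noteq> 0"
      then have "r \<in> keys (PhiT ts)" by (rule val_nz_keys)
      then show "length r \<le> ?d" by simp
    qed
    have "mono [] \<in> M" by (rule descent[OF fin c2 WM addM smM lmM, of ts ?d]) (use fM ts nz bd in simp_all)
    then have "Tfin \<subseteq> M" by (rule all_in_M[OF WM addM smM lmM])
    then show ?thesis using MT by blast
  qed simp
qed

end

definition rkT :: "int \<Rightarrow> hv list tm \<Rightarrow> hv list tm" where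
  "rkT k us = map (\<lambda>(c,w). (c, w @ [L k])) us"

lemma rkT_Nil[simp]: "rkT k [] = []" by (simp add: rkT_def)
lemma rkT_Cons[simp]: "rkT k ((c,w)#us) = (c, w @ [L k]) # rkT k us" by (simp add: rkT_def)
lemma rkT_app[simp]: "rkT k (ts @ us) = rkT k ts @ rkT k us" by (simp add: rkT_def)
lemma rkT_sc[simp]: "rkT k (sc c us) = sc c (rkT k us)" by (induction us) auto
lemma rkT_lx: "rkT k (lx x us) = lx x (rkT k us)" by (simp add: rkT_def lx_def split_def)

lemma snoc_iff: "(w @ [L k] = v) = (v \<noteq> [] \<and> last v = L k \<and> butlast v = w)"
  by (induction v rule: rev_induct) auto

lemma val_rkT: "val (rkT k ts) v = (if v \<noteq> [] \<and> last v = L k then val ts (butlast v) else 0)"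
proof (induction ts)
  case (Cons p ts)
  obtain c w where p: "p = (c,w)" by force
  show ?case using Cons by (auto simp: p snoc_iff)
qed simp

lemma rkT_cong: "(\<And>v. val ts v = val us v) \<Longrightarrow> val (rkT k ts) v = val (rkT k us) v"
  by (simp add: val_rkT)

lemma rkT_RL: "rkT k (RL a x y b) = RL a x y (b @ [L k])"
  by (simp add: rkT_def RL_def sc_def split_def)

context FH begin

lemma R_L_Nil: "R (L k) [(1,[])] = [(1,[k])]" by (simp add: R_Cons)

lemma Phi_snoc: "Phi (w @ [L k]) = RA w [(1,[k])]"
  by (simp add: Phi_append R_L_Nil)

lemma rho_p_k:
  assumes S: "S_phi ph = {k}" and p: "p \<in> p_basis"
  shows "val (R p [(1,[k])]) r = ph p * val [(1,[k])] r"
proof -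
  have "p \<in> range I \<or> p = Z1 \<or> p = Z2 \<or> p = Z3" using p by (auto simp: p_basis_def)
  then show ?thesis
  proof (elim disjE)
    assume "p \<in> range I"
    then obtain n where pn: "p = I n" by blast
    have z: "of_int n * ph (I (k+n)) = 0"
    proof (cases "n = 0")
      case False
      then have "k + n \<notin> S_phi ph" using S by simp
      then show ?thesis by (simp add: S_phi_def)
    qed simp
    have "R (I n) [(1,[k])] = sc 1 (R (L k) [(ph (I n), [])] @ sc (- of_int n) [(ph (I (k+n)), [])]
         @ (if k = -n then [(- of_int (k^2+k) * ph Z2, [])] else []))"
      by (simp add: R_Cons rho_I_Cons)
    then show ?thesis using z by (simp add: pn R_Cons phZ2)
  qed (simp_all add: R_Cons)
qed

lemma Wker_rk0:
  assumes S: "S_phi ph = {k}"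
  shows "f \<in> Wker ph \<Longrightarrow> \<exists>ts. f = val ts \<and> (\<forall>r. val (PhiT (rkT k ts)) r = 0)"
proof (induction rule: Wker.induct)
  case (rel a x y b)
  show ?case by (rule exI[of _ "RL a x y b"]) (simp add: relv_val rkT_RL PhiT_RL)
next
  case (ind p a)
  have e: "(\<lambda>v. mono (a @ [p]) v - ph p * mono a v) = val [(1, a@[p]), (- ph p, a)]"
    by (auto simp: mono_def fun_eq_iff)
  have "val (PhiT (rkT k [(1, a@[p]), (- ph p, a)])) r = 0" for r
  proof -
    have "val (PhiT (rkT k [(1, a@[p]), (- ph p, a)])) r = val (RA a (R p [(1,[k])])) r - ph p * val (RA a [(1,[k])]) r"
      using Phi_snoc[of "a@[p]"] Phi_snoc[of a] by (simp add: RA_append)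
    also have "val (RA a (R p [(1,[k])])) r = val (RA a (sc (ph p) [(1,[k])])) r"
      by (rule RA_cong) (simp add: rho_p_k[OF S ind])
    also have "RA a (sc (ph p) [(1,[k])]) = sc (ph p) (RA a [(1,[k])])" by (rule RA_sc)
    finally show ?thesis by simp
  qed
  then show ?case using e by blast
next
  case zero
  show ?case by (rule exI[of _ "[]"]) (simp add: fun_eq_iff)
next
  case (add f g)
  then obtain ts us where "f = val ts" "\<forall>r. val (PhiT (rkT k ts)) r = 0" "g = val us" "\<forall>r. val (PhiT (rkT k us)) r = 0"
    by blast
  then show ?case by (intro exI[of _ "ts @ us"]) (simp add: fun_eq_iff)
next
  case (smult f c)
  then obtain ts where "f = val ts" "\<forall>r. val (PhiT (rkT k ts)) r = 0" by blast
  then show ?case by (intro exI[of _ "sc c ts"]) (simp add: fun_eq_iff)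
qed

lemma Wker_rk:
  assumes S: "S_phi ph = {k}" and W: "val ts \<in> Wker ph"
  shows "val (PhiT (rkT k ts)) r = 0"
proof -
  obtain us where us: "val ts = val us" "\<forall>r. val (PhiT (rkT k us)) r = 0" using Wker_rk0[OF S W] by blast
  have "val (PhiT (rkT k ts)) r = val (PhiT (rkT k us)) r"
    by (rule PhiT_cong) (rule rkT_cong, simp add: us(1))
  then show ?thesis using us(2) by simp
qed

lemma topk: "sorted n \<Longrightarrow> \<exists>E. allm (\<lambda>r. length r \<le> length n) E \<and>
   (\<forall>r. val (RA (map L n) [(1,[k])]) r = val ((1, insort k n) # E) r)"
proof (induction n)
  case Nil
  show ?case by (rule exI[of _ "[]"]) simp
next
  case (Cons j n)
  have sn: "sorted n" and jn: "\<forall>e\<in>set n. j \<le> e" using Cons.prems by auto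
  obtain E1 where E1: "allm (\<lambda>r. length r \<le> length n) E1"
    "\<forall>r. val (RA (map L n) [(1,[k])]) r = val ((1, insort k n) # E1) r" using Cons.IH[OF sn] by blast
  let ?E = "tl (rho (L j) (insort k n)) @ R (L j) E1"
  have Elen: "allm (\<lambda>r. length r \<le> length (j#n)) ?E"
  proof -
    have a1: "allm (\<lambda>r. length r \<le> length (j#n)) (tl (rho (L j) (insort k n)))"
      by (rule allm_mono[OF rho_L_tl]) simp
    have a2: "allm (\<lambda>r. length r \<le> length (j#n)) (R (L j) E1)"
      unfolding R_def
    proof (rule allm_lin)
      fix c m assume "(c,m) \<in> set E1"
      then have lm: "length m \<le> length n" using E1(1) by (rule allm_mem[rotated])
      show "allm (\<lambda>r. length r \<le> length (j#n)) (rho (L j) m)"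
        by (rule allm_mono[OF rho_L_len]) (use lm in simp)
    qed
    show ?thesis using a1 a2 by simp
  qed
  have ins: "insort j (insort k n) = insort k (j#n)"
    using insort_left_comm[of j k n] insort_lo[OF jn] by simp
  have V: "val (RA (map L (j#n)) [(1,[k])]) r = val ((1, insort k (j#n)) # ?E) r" for r
  proof -
    have "val (RA (map L (j#n)) [(1,[k])]) r = val (R (L j) ((1, insort k n) # E1)) r"
      by simp (rule R_cong, use E1(2) in simp)
    also have "\<dots> = val (rho (L j) (insort k n)) r + val (R (L j) E1) r" by (simp add: R_Cons)
    also have "val (rho (L j) (insort k n)) r = val ((1, insort j (insort k n)) # tl (rho (L j) (insort k n))) r"
      by (subst rho_L_shape) simp
    finally show ?thesis using ins by simp
  qed
  show ?case using Elen V by blast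
qed

lemma PhiT_rk_emb: "PhiT (rkT k (embT Q)) = lin (\<lambda>n. RA (map L n) [(1,[k])]) Q"
  by (induction Q) (auto simp: Phi_snoc)

lemma not_const:
  assumes S: "S_phi ph = {k}"
  shows "\<not> (\<forall>r. val (PhiT (rkT k us)) r = val [(1,[])] r)"
proof
  assume H: "\<forall>r. val (PhiT (rkT k us)) r = val [(1,[])] r"
  let ?Q = "PhiT us"
  let ?F = "\<lambda>n. RA (map L n) [(1,[k])]"
  have "eqT us (embT ?Q)" by (rule W4)
  moreover have "val (us @ sc (-1) (embT ?Q)) = (\<lambda>v. val us v - val (embT ?Q) v)" by (simp add: fun_eq_iff)
  ultimately have "val (us @ sc (-1) (embT ?Q)) \<in> Wker ph"
    unfolding eqT_def by simp
  then have z: "val (PhiT (rkT k (us @ sc (-1) (embT ?Q)))) r = 0" for r by (rule Wker_rk[OF S])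
  have eqQ: "val (PhiT (rkT k us)) r = val (lin ?F ?Q) r" for r
    using z[of r] by (simp add: PhiT_rk_emb)
  have sQ: "allm sorted ?Q" by (rule PhiT_sorted)
  show False
  proof (cases "\<exists>n. val ?Q n \<noteq> 0")
    case False
    have "val (lin ?F ?Q) [] = val (lin ?F []) []" by (rule lin_val_cong) (use False in simp)
    then show False using H eqQ[of "[]"] by simp
  next
    case True
    let ?N = "{n \<in> keys ?Q. val ?Q n \<noteq> 0}"
    have Nfin: "finite ?N" by (rule finite_subset[OF _ finite_keys[of ?Q]]) blast
    have Nne: "?N \<noteq> {}"
    proof -
      obtain n where n: "val ?Q n \<noteq> 0" using True by blast
      then have "n \<in> ?N" using val_nz_keys[of ?Q n] by simp
      then show ?thesis by blast
    qed
    let ?d = "Max (length ` ?N)"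
    have "?d \<in> length ` ?N" using Nfin Nne by simp
    then obtain nstar where ns0: "?d = length nstar" "nstar \<in> ?N" by (rule imageE)
    have ns: "nstar \<in> ?N" "length nstar = ?d" using ns0 by simp_all
    have bd: "length n \<le> ?d" if "n \<in> ?N" for n using Nfin that by simp
    have "\<forall>n. \<exists>E. sorted n \<longrightarrow> (allm (\<lambda>r. length r \<le> length n) E \<and>
        (\<forall>r. val (?F n) r = val ((1, insort k n) # E) r))"
    proof
      fix n
      show "\<exists>E. sorted n \<longrightarrow> (allm (\<lambda>r. length r \<le> length n) E \<and>
        (\<forall>r. val (?F n) r = val ((1, insort k n) # E) r))"
      proof (cases "sorted n")
        case True
        from topk[OF True, of k] obtain E where "allm (\<lambda>r. length r \<le> length n) E"
          "\<forall>r. val (?F n) r = val ((1, insort k n) # E) r" by blast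
        then show ?thesis by blast
      qed simp
    qed
    from choice[OF this] obtain Ef where Ef: "\<And>n. sorted n \<Longrightarrow> allm (\<lambda>r. length r \<le> length n) (Ef n) \<and>
        (\<forall>r. val (?F n) r = val ((1, insort k n) # Ef n) r)" by blast
    let ?rs = "insort k nstar"
    have snstar: "sorted nstar" using sQ ns(1) by (auto intro: allm_keys)
    have "val (lin ?F ?Q) ?rs = (\<Sum>n\<in>keys ?Q. val ?Q n * val (?F n) ?rs)"
      by (rule val_lin_keys) auto
    moreover have "(\<Sum>n\<in>keys ?Q. val ?Q n * val (?F n) ?rs) \<noteq> 0"
    proof (rule sum_single_nz[of _ nstar])
      show "finite (keys ?Q)" by simp
      show "nstar \<in> keys ?Q" using ns by simp
    next
      fix n assume nK: "n \<in> keys ?Q" and nn: "n \<noteq> nstar"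
      show "val ?Q n * val (?F n) ?rs = 0"
      proof (cases "val ?Q n = 0")
        case False
        have sn: "sorted n" using sQ nK by (rule allm_keys)
        have ln: "length n \<le> ?d" using bd nK False by simp
        have v: "val (?F n) ?rs = val ((1, insort k n) # Ef n) ?rs" using Ef[OF sn] by blast
        have "insort k n \<noteq> ?rs"
        proof
          assume "insort k n = ?rs"
          then have "mset (insort k n) = mset ?rs" by simp
          then have "mset n = mset nstar" by simp
          then show False using sorted_mset_eq[OF sn snstar] nn by simp
        qed
        moreover have "val (Ef n) ?rs = 0"
        proof (rule val_zero)
          fix c m assume cm: "(c,m) \<in> set (Ef n)" and mr: "m = ?rs"
          have "allm (\<lambda>r. length r \<le> length n) (Ef n)" using Ef[OF sn] by blast
          then have "length m \<le> length n" using cm by (rule allm_mem)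
          then show "c = 0" using mr ln ns(2) by simp
        qed
        ultimately show ?thesis using v by simp
      qed simp
    next
      have v: "val (?F nstar) ?rs = val ((1, ?rs) # Ef nstar) ?rs" using Ef[OF snstar] by blast
      have "val (Ef nstar) ?rs = 0"
      proof (rule val_zero)
        fix c m assume cm: "(c,m) \<in> set (Ef nstar)" and mr: "m = ?rs"
        have "allm (\<lambda>r. length r \<le> length nstar) (Ef nstar)" using Ef[OF snstar] by blast
        then have "length m \<le> length nstar" using cm by (rule allm_mem)
        then show "c = 0" using mr by simp
      qed
      then show "val ?Q nstar * val (?F nstar) ?rs \<noteq> 0" using v ns(1) by simp
    qed
    ultimately have "val (lin ?F ?Q) ?rs \<noteq> 0" by simp
    moreover have "val (lin ?F ?Q) ?rs = 0"
    proof -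
      have h: "[] \<noteq> ?rs" by (cases nstar) auto
      show ?thesis using H eqQ[of ?rs] h by simp
    qed
    ultimately show False by simp
  qed
qed

lemma reducible:
  assumes S: "S_phi ph = {k}"
  shows "\<not> W_irreducible ph"
proof
  assume irr: "W_irreducible ph"
  define M where "M = {f. \<exists>ts us. f = val ts \<and> (\<forall>r. val (PhiT ts) r = val (PhiT (rkT k us)) r)}"
  have WM: "Wker ph \<subseteq> M"
  proof
    fix f assume "f \<in> Wker ph"
    then obtain ts where "f = val ts" "\<forall>r. val (PhiT ts) r = 0" using Wker_PhiT by blast
    then show "f \<in> M" unfolding M_def by (intro CollectI exI[of _ ts] exI[of _ "[]"]) simp
  qed
  have MT: "M \<subseteq> Tfin" unfolding M_def using val_Tfin by blast
  have addM: "\<forall>f\<in>M. \<forall>g\<in>M. (\<lambda>v. f v + g v) \<in> M"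
  proof (intro ballI)
    fix f g assume "f \<in> M" "g \<in> M"
    then obtain ts us ts' us' where a: "f = val ts" "\<forall>r. val (PhiT ts) r = val (PhiT (rkT k us)) r"
      "g = val ts'" "\<forall>r. val (PhiT ts') r = val (PhiT (rkT k us')) r" unfolding M_def by blast
    show "(\<lambda>v. f v + g v) \<in> M" unfolding M_def
      by (intro CollectI exI[of _ "ts @ ts'"] exI[of _ "us @ us'"]) (simp add: a fun_eq_iff)
  qed
  have smM: "\<forall>f\<in>M. \<forall>c. (\<lambda>v. c * f v) \<in> M"
  proof (intro ballI allI)
    fix f c assume "f \<in> M"
    then obtain ts us where a: "f = val ts" "\<forall>r. val (PhiT ts) r = val (PhiT (rkT k us)) r"
      unfolding M_def by blast
    show "(\<lambda>v. c * f v) \<in> M" unfolding M_def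
      by (intro CollectI exI[of _ "sc c ts"] exI[of _ "sc c us"]) (simp add: a fun_eq_iff)
  qed
  have lmM: "\<forall>f\<in>M. \<forall>x. lmul x f \<in> M"
  proof (intro ballI allI)
    fix f x assume "f \<in> M"
    then obtain ts us where a: "f = val ts" "\<forall>r. val (PhiT ts) r = val (PhiT (rkT k us)) r"
      unfolding M_def by blast
    have "val (PhiT (lx x ts)) r = val (PhiT (rkT k (lx x us))) r" for r
      unfolding PhiT_lx rkT_lx by (rule R_cong) (use a(2) in simp)
    then show "lmul x f \<in> M" unfolding M_def using a(1) lmul_val by blast
  qed
  have MW: "M \<noteq> Wker ph"
  proof
    assume "M = Wker ph"
    moreover have "val [(1,[L k])] \<in> M" unfolding M_def
      by (intro CollectI exI[of _ "[(1,[L k])]"] exI[of _ "[(1,[])]"]) simp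
    ultimately have "\<forall>r. val (PhiT [(1,[L k])]) r = 0" using Wker_iff by blast
    then have "val (PhiT [(1,[L k])]) [k] = 0" by blast
    moreover have "val (PhiT [(1,[L k])]) [k] = 1" by (simp add: R_Cons)
    ultimately show False by simp
  qed
  have MT2: "M \<noteq> Tfin"
  proof
    assume "M = Tfin"
    then have "val [(1,[])] \<in> M" using val_Tfin by blast
    then obtain ts us where a: "val [(1,[])] = val ts" "\<forall>r. val (PhiT ts) r = val (PhiT (rkT k us)) r"
      unfolding M_def by blast
    have "val (PhiT (rkT k us)) r = val [(1,[])] r" for r
    proof -
      have "val (PhiT [(1,[])]) r = val (PhiT ts) r" by (rule PhiT_cong) (simp add: a(1))
      then show ?thesis using a(2) by simp
    qed
    then show False using not_const[OF S, of us] by blast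
  qed
  have "\<forall>M. Wker ph \<subseteq> M \<and> M \<subseteq> Tfin
          \<and> (\<forall>f\<in>M. \<forall>g\<in>M. (\<lambda>v. f v + g v) \<in> M)
          \<and> (\<forall>f\<in>M. \<forall>c. (\<lambda>v. c * f v) \<in> M)
          \<and> (\<forall>f\<in>M. \<forall>x. lmul x f \<in> M)
        \<longrightarrow> M = Wker ph \<or> M = Tfin" using irr unfolding W_irreducible_def by (rule conjunct2)
  then have "Wker ph \<subseteq> M \<and> M \<subseteq> Tfin
          \<and> (\<forall>f\<in>M. \<forall>g\<in>M. (\<lambda>v. f v + g v) \<in> M)
          \<and> (\<forall>f\<in>M. \<forall>c. (\<lambda>v. c * f v) \<in> M)
          \<and> (\<forall>f\<in>M. \<forall>x. lmul x f \<in> M)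
        \<longrightarrow> M = Wker ph \<or> M = Tfin" by (rule spec)
  then have "M = Wker ph \<or> M = Tfin" using WM MT addM smM lmM by blast
  then show False using MW MT2 by blast
qed

end

theorem theorem4p4:
  fixes \<phi> :: "hv \<Rightarrow> complex"
  assumes "finite_hom \<phi>"
    and "\<exists>h\<in>H_basis. \<phi> h \<noteq> 0"
  shows "W_irreducible \<phi> \<longleftrightarrow> card (S_phi \<phi>) \<ge> 2"
proof -
  have Z3: "\<phi> Z3 = 0" and Z2: "\<phi> Z2 = 0" and fin: "finite (S_phi \<phi>)"
    using assms(1) by (auto simp: finite_hom_def p_hom_def)
  interpret FH \<phi> by unfold_locales (rule Z3, rule Z2)
  have ne: "S_phi \<phi> \<noteq> {}"
  proof -
    obtain h where h: "h \<in> H_basis" "\<phi> h \<noteq> 0" using assms(2) by blast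
    then have "h \<noteq> Z3" using Z3 by auto
    then obtain n where "h = I n" using h(1) by (auto simp: H_basis_def)
    then have "n \<in> S_phi \<phi>" using h(2) by (simp add: S_phi_def)
    then show ?thesis by blast
  qed
  show ?thesis
  proof
    assume irr: "W_irreducible \<phi>"
    show "card (S_phi \<phi>) \<ge> 2"
    proof (rule ccontr)
      assume "\<not> card (S_phi \<phi>) \<ge> 2"
      moreover have "card (S_phi \<phi>) \<noteq> 0" using fin ne by simp
      ultimately have "card (S_phi \<phi>) = 1" by simp
      then obtain k where "S_phi \<phi> = {k}" by (rule card_1_singletonE)
      then show False using reducible irr by blast
    qed
  next
    assume "card (S_phi \<phi>) \<ge> 2"
    then show "W_irreducible \<phi>" by (rule irred[OF fin])
  qed
qed


end
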